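(* Let $q=q(n)\in[0,1]$ satisfy $n\sqrt{q}\,e^{-qn}\gg1$, and let $M$ be the maximum number of edges in a matching of the random graph $G_{n,q}$. Then for every $\varepsilon>0$ there is a constant $d=d(\varepsilon)>0$ such that for every interval $I$ of length $\lfloor dn\sqrt{q}\,e^{-qn}\rfloor$ we have $\Pr(M\in I)\le\varepsilon+o(1)$ (with the $o(1)$ term tending to $0$ as $n\to\infty$ uniformly over such intervals).
   Context: $G_{n,q}$ denotes the binomial random graph on vertex set $[n]$ in which each pair of vertices is an edge independently with probability $q$. For positive functions, $a\gg b$ means $a/b\to\infty$ as $n\to\infty$. *)

theory Defs
  imports Complex_Main
begin

definition all_pairs :: "nat \<Rightarrow> nat set set" where
  "all_pairs n = {e. \<exists>i j. i \<in> {1..n} \<and> j \<in> {1..n} \<and> i \<noteq> j \<and> e = {i, j}}"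

definition is_matching :: "nat set set \<Rightarrow> bool" where
  "is_matching F \<longleftrightarrow> (\<forall>e\<in>F. \<forall>f\<in>F. e \<noteq> f \<longrightarrow> e \<inter> f = {})"

definition matching_number :: "nat set set \<Rightarrow> nat" where
  "matching_number E = Max (card ` {F. F \<subseteq> E \<and> is_matching F})"

text \<open>Probability that the binomial random graph G(n,q) on [n] (edge set E \<subseteq> all_pairs n,
  each pair present independently with probability q) satisfies P.\<close>
definition gnq_prob :: "nat \<Rightarrow> real \<Rightarrow> (nat set set \<Rightarrow> bool) \<Rightarrow> real" where
  "gnq_prob n q P =
     (\<Sum>E\<in>{E. E \<subseteq> all_pairs n \<and> P E}.
        q ^ card E * (1 - q) ^ (card (all_pairs n) - card E))"

end

theory Submission
  imports Defs
begin


definition wt :: "real \<Rightarrow> nat \<Rightarrow> nat set set \<Rightarrow> real" where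
  "wt q N E = q ^ card E * (1 - q) ^ (N - card E)"

lemma sum_pow_weights:
  fixes q :: real
  assumes "finite S"
  shows "(\<Sum>E\<in>Pow S. q ^ card E * (1 - q) ^ (card S - card E)) = 1"
proof -
  have "(\<Prod>x\<in>S. q + (1 - q)) = (\<Sum>X\<in>Pow S. (\<Prod>x\<in>X. q) * (\<Prod>x\<in>S-X. (1 - q)))"
    by (rule prod_add[OF assms])
  also have "\<dots> = (\<Sum>E\<in>Pow S. q ^ card E * (1 - q) ^ (card S - card E))"
    by (intro sum.cong refl) (auto simp: card_Diff_subset finite_subset[OF _ assms])
  finally show ?thesis by simp
qed

lemma sum_avoid:
  fixes q :: real
  assumes "finite S" "A \<subseteq> S"
  shows "(\<Sum>E\<in>{E. E \<subseteq> S \<and> E \<inter> A = {}}. q ^ card E * (1 - q) ^ (card S - card E)) = (1 - q) ^ card A"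
proof -
  have fA: "finite A" using assms finite_subset by blast
  have eq: "{E. E \<subseteq> S \<and> E \<inter> A = {}} = Pow (S - A)" by auto
  have cS: "card S = card (S - A) + card A" using assms fA
    by (metis card_Diff_subset card_mono le_add_diff_inverse2 )
  have "(\<Sum>E\<in>Pow (S - A). q ^ card E * (1 - q) ^ (card S - card E))
      = (\<Sum>E\<in>Pow (S - A). (1 - q) ^ card A * (q ^ card E * (1 - q) ^ (card (S - A) - card E)))"
  proof (intro sum.cong refl)
    fix E assume "E \<in> Pow (S - A)"
    then have "card E \<le> card (S - A)" using assms by (auto intro: card_mono)
    then have "card S - card E = (card (S - A) - card E) + card A" using cS by simp
    then show "q ^ card E * (1 - q) ^ (card S - card E) = (1 - q) ^ card A * (q ^ card E * (1 - q) ^ (card (S - A) - card E))"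
      by (simp add: power_add)
  qed
  also have "\<dots> = (1 - q) ^ card A" 
    using sum_pow_weights[of "S - A" q] assms by (simp add: sum_distrib_left[symmetric])
  finally show ?thesis using eq by simp
qed

lemma finite_all_pairs: "finite (all_pairs n)"
proof -
  have "all_pairs n \<subseteq> Pow {1..n}" unfolding all_pairs_def by auto
  then show ?thesis by (rule finite_subset) simp
qed

lemma gnq_prob_le1:
  assumes "0 \<le> q" "q \<le> 1"
  shows "gnq_prob n q P \<le> 1"
proof -
  have "gnq_prob n q P \<le> (\<Sum>E\<in>Pow (all_pairs n). q ^ card E * (1 - q) ^ (card (all_pairs n) - card E))"
    unfolding gnq_prob_def using assms finite_all_pairs
    by (intro sum_mono2) auto
  then show ?thesis using sum_pow_weights[OF finite_all_pairs] by simp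
qed



definition star :: "nat \<Rightarrow> nat \<Rightarrow> nat set set" where
  "star n v = {e \<in> all_pairs n. v \<in> e}"

definition iso :: "nat set set \<Rightarrow> nat \<Rightarrow> bool" where
  "iso E v \<longleftrightarrow> (\<forall>e\<in>E. v \<notin> e)"

definition Zc :: "nat \<Rightarrow> nat set set \<Rightarrow> nat" where
  "Zc n E = card {v \<in> {1..n}. iso E v}"

lemma star_eq: assumes "v \<in> {1..n}" shows "star n v = (\<lambda>j. {v, j}) ` ({1..n} - {v})"
proof
  show "star n v \<subseteq> (\<lambda>j. {v, j}) ` ({1..n} - {v})" unfolding star_def all_pairs_def by auto
  show "(\<lambda>j. {v, j}) ` ({1..n} - {v}) \<subseteq> star n v"
  proof
    fix e assume "e \<in> (\<lambda>j. {v, j}) ` ({1..n} - {v})"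
    then obtain j where j: "j \<in> {1..n}" "j \<noteq> v" "e = {v, j}" by blast
    then show "e \<in> star n v" using assms unfolding star_def all_pairs_def by blast
  qed
qed

lemma card_star: assumes "v \<in> {1..n}" shows "card (star n v) = n - 1"
proof -
  have "inj_on (\<lambda>j. {v, j}) ({1..n} - {v})"
    by (auto simp: inj_on_def doubleton_eq_iff)
  then show ?thesis using assms by (simp add: star_eq card_image)
qed

lemma card_star2:
  assumes "u \<in> {1..n}" "v \<in> {1..n}" "u \<noteq> v"
  shows "card (star n u \<union> star n v) = 2 * n - 3"
proof -
  have int: "star n u \<inter> star n v = {{u, v}}"
    using assms unfolding star_def all_pairs_def by (auto simp: doubleton_eq_iff)
  have f: "finite (star n u)" "finite (star n v)"
    using finite_all_pairs unfolding star_def by auto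
  have "card (star n u) + card (star n v) = card (star n u \<union> star n v) + card (star n u \<inter> star n v)"
    by (rule card_Un_Int[OF f])
  then have "2 * (n - 1) = card (star n u \<union> star n v) + 1"
    using card_star assms int by simp
  moreover have "n \<ge> 2" using assms by auto
  ultimately show ?thesis by simp
qed

lemma iso_iff: "E \<subseteq> all_pairs n \<Longrightarrow> iso E v \<longleftrightarrow> E \<inter> star n v = {}"
  unfolding iso_def star_def by auto

lemma star_sub: "star n v \<subseteq> all_pairs n" unfolding star_def by auto

abbreviation W :: "nat \<Rightarrow> real \<Rightarrow> nat set set \<Rightarrow> real" where "W n q E \<equiv> q ^ card E * (1 - q) ^ (card (all_pairs n) - card E)"

lemma prob_iso1:
  assumes "v \<in> {1..n}"
  shows "(\<Sum>E\<in>{E. E \<subseteq> all_pairs n \<and> iso E v}. W n q E) = (1 - q) ^ (n - 1)"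
proof -
  have "{E. E \<subseteq> all_pairs n \<and> iso E v} = {E. E \<subseteq> all_pairs n \<and> E \<inter> star n v = {}}"
    using iso_iff by blast
  then show ?thesis using sum_avoid[OF finite_all_pairs star_sub, where q=q] card_star[OF assms] by simp
qed

lemma prob_iso2:
  assumes "u \<in> {1..n}" "v \<in> {1..n}" "u \<noteq> v"
  shows "(\<Sum>E\<in>{E. E \<subseteq> all_pairs n \<and> iso E u \<and> iso E v}. W n q E) = (1 - q) ^ (2 * n - 3)"
proof -
  have "{E. E \<subseteq> all_pairs n \<and> iso E u \<and> iso E v} = {E. E \<subseteq> all_pairs n \<and> E \<inter> (star n u \<union> star n v) = {}}"
    using iso_iff by blast
  moreover have "star n u \<union> star n v \<subseteq> all_pairs n" using star_sub by auto
  ultimately show ?thesis using sum_avoid[OF finite_all_pairs, where A="star n u \<union> star n v" and q=q] card_star2[OF assms] by simp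
qed

lemma Zc_sum: "real (Zc n E) = (\<Sum>v\<in>{1..n}. if iso E v then 1 else 0)"
proof -
  have "real (Zc n E) = (\<Sum>v\<in>{v \<in> {1..n}. iso E v}. 1)" unfolding Zc_def by simp
  also have "\<dots> = (\<Sum>v\<in>{1..n}. if iso E v then 1 else 0)" by (rule sum.inter_filter) simp
  finally show ?thesis .
qed

lemma sum_ind:
  "(\<Sum>E\<in>Pow (all_pairs n). W n q E * (if P E then 1 else 0)) = (\<Sum>E\<in>{E. E \<subseteq> all_pairs n \<and> P E}. W n q E)"
proof -
  have "(\<Sum>E\<in>{E. E \<subseteq> all_pairs n \<and> P E}. W n q E) = (\<Sum>E\<in>{E \<in> Pow (all_pairs n). P E}. W n q E)"
    by (intro sum.cong) auto
  also have "\<dots> = (\<Sum>E\<in>Pow (all_pairs n). if P E then W n q E else 0)"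
    by (rule sum.inter_filter) (simp add: finite_all_pairs)
  finally show ?thesis by (simp add: if_distrib cong: if_cong)
qed

lemma EZ:
  "(\<Sum>E\<in>Pow (all_pairs n). W n q E * real (Zc n E)) = real n * (1 - q) ^ (n - 1)"
proof -
  have "(\<Sum>E\<in>Pow (all_pairs n). W n q E * real (Zc n E))
      = (\<Sum>E\<in>Pow (all_pairs n). \<Sum>v\<in>{1..n}. W n q E * (if iso E v then 1 else 0))"
    by (simp add: Zc_sum sum_distrib_left)
  also have "\<dots> = (\<Sum>v\<in>{1..n}. \<Sum>E\<in>Pow (all_pairs n). W n q E * (if iso E v then 1 else 0))"
    by (rule sum.swap)
  also have "\<dots> = (\<Sum>v\<in>{1..n}. (1 - q) ^ (n - 1))"
    by (intro sum.cong refl) (simp only: sum_ind prob_iso1)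
  finally show ?thesis by simp
qed

lemma EZ2:
  "(\<Sum>E\<in>Pow (all_pairs n). W n q E * real (Zc n E) ^ 2)
     = real n * (1 - q) ^ (n - 1) + real n * (real n - 1) * (1 - q) ^ (2 * n - 3)"
proof -
  have "(\<Sum>E\<in>Pow (all_pairs n). W n q E * real (Zc n E) ^ 2)
      = (\<Sum>E\<in>Pow (all_pairs n). \<Sum>u\<in>{1..n}. \<Sum>v\<in>{1..n}. W n q E * (if iso E u \<and> iso E v then 1 else 0))"
  proof (intro sum.cong refl)
    fix E
    have "real (Zc n E) ^ 2 = (\<Sum>u\<in>{1..n}. \<Sum>v\<in>{1..n}. (if iso E u then 1 else 0) * (if iso E v then (1::real) else 0))"
      by (simp add: power2_eq_square Zc_sum sum_product)
    also have "\<dots> = (\<Sum>u\<in>{1..n}. \<Sum>v\<in>{1..n}. (if iso E u \<and> iso E v then 1 else 0))"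
      by (intro sum.cong refl) auto
    finally show "W n q E * real (Zc n E) ^ 2 = (\<Sum>u\<in>{1..n}. \<Sum>v\<in>{1..n}. W n q E * (if iso E u \<and> iso E v then 1 else 0))"
      by (simp add: sum_distrib_left)
  qed
  also have "\<dots> = (\<Sum>u\<in>{1..n}. \<Sum>E\<in>Pow (all_pairs n). \<Sum>v\<in>{1..n}. W n q E * (if iso E u \<and> iso E v then 1 else 0))"
    by (rule sum.swap)
  also have "\<dots> = (\<Sum>u\<in>{1..n}. \<Sum>v\<in>{1..n}. \<Sum>E\<in>Pow (all_pairs n). W n q E * (if iso E u \<and> iso E v then 1 else 0))"
    by (intro sum.cong refl) (rule sum.swap)
  also have "\<dots> = (\<Sum>u\<in>{1..n}. \<Sum>v\<in>{1..n}. if u = v then (1 - q) ^ (n - 1) else (1 - q) ^ (2 * n - 3))"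
  proof (intro sum.cong refl)
    fix u v assume uv: "u \<in> {1..n}" "v \<in> {1..n}"
    show "(\<Sum>E\<in>Pow (all_pairs n). W n q E * (if iso E u \<and> iso E v then 1 else 0)) =
          (if u = v then (1 - q) ^ (n - 1) else (1 - q) ^ (2 * n - 3))"
      using prob_iso1[OF uv(1)] prob_iso2[OF uv] by (simp only: sum_ind) auto
  qed
  also have "\<dots> = (\<Sum>u\<in>{1..n}. (1 - q) ^ (n - 1) + (real n - 1) * (1 - q) ^ (2 * n - 3))"
  proof (intro sum.cong refl)
    fix u assume u: "u \<in> {1..n}"
    have "(\<Sum>v\<in>{1..n}. if u = v then (1 - q) ^ (n - 1) else (1 - q) ^ (2 * n - 3))
        = (\<Sum>v\<in>{1..n}. (if u = v then (1 - q) ^ (n - 1) - (1 - q) ^ (2 * n - 3) else 0) + (1 - q) ^ (2 * n - 3))"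
      by (intro sum.cong refl) auto
    also have "\<dots> = (1 - q) ^ (n - 1) - (1 - q) ^ (2 * n - 3) + real n * (1 - q) ^ (2 * n - 3)"
      using u by (simp add: sum.distrib)
    finally show "(\<Sum>v\<in>{1..n}. if u = v then (1 - q) ^ (n - 1) else (1 - q) ^ (2 * n - 3))
      = (1 - q) ^ (n - 1) + (real n - 1) * (1 - q) ^ (2 * n - 3)" by (simp add: algebra_simps)
  qed
  finally show ?thesis by (simp add: algebra_simps)
qed

lemma total1: "0 \<le> q \<Longrightarrow> q \<le> 1 \<Longrightarrow> (\<Sum>E\<in>Pow (all_pairs n). W n q E) = 1"
  using sum_pow_weights[OF finite_all_pairs] by simp

lemma cheb:
  assumes q: "0 \<le> q" "q < 1" and n: "n \<ge> 2"
  defines "\<mu> \<equiv> real n * (1 - q) ^ (n - 1)"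
  assumes mu: "\<mu> > 0"
  shows "(\<Sum>E\<in>{E. E \<subseteq> all_pairs n \<and> real (Zc n E) < \<mu> / 2}. W n q E) \<le> 4 / \<mu> + 4 * q / (1 - q)"
proof -
  let ?S = "Pow (all_pairs n)"
  have wnn: "\<And>E. W n q E \<ge> 0" using q by simp
  have "(\<Sum>E\<in>{E. E \<subseteq> all_pairs n \<and> real (Zc n E) < \<mu> / 2}. W n q E)
     = (\<Sum>E\<in>?S. W n q E * (if real (Zc n E) < \<mu> / 2 then 1 else 0))"
    by (simp only: sum_ind)
  also have "\<dots> \<le> (\<Sum>E\<in>?S. W n q E * ((real (Zc n E) - \<mu>)^2 * (4 / \<mu>^2)))"
  proof (intro sum_mono mult_left_mono wnn)
    fix E
    show "(if real (Zc n E) < \<mu> / 2 then 1 else 0) \<le> (real (Zc n E) - \<mu>)^2 * (4 / \<mu>^2)"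
    proof (cases "real (Zc n E) < \<mu> / 2")
      case True
      then have "\<mu>/2 \<le> \<mu> - real (Zc n E)" by simp
      then have "(\<mu>/2)^2 \<le> (real (Zc n E) - \<mu>)^2" using mu
        by (metis abs_of_nonneg less_eq_real_def mult_pos_pos power2_abs power_mono zero_less_divide_iff zero_less_numeral abs_minus_commute)
      then have "1 \<le> (real (Zc n E) - \<mu>)^2 * (4 / \<mu>^2)" using mu
        by (simp add: field_simps power2_eq_square)
      then show ?thesis using True by simp
    qed simp
  qed
  also have "\<dots> = (4 / \<mu>^2) * ((\<Sum>E\<in>?S. W n q E * real (Zc n E) ^ 2)
                  - 2 * \<mu> * (\<Sum>E\<in>?S. W n q E * real (Zc n E)) + \<mu>^2 * (\<Sum>E\<in>?S. W n q E))"
  proof -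
    have h: "\<And>E. W n q E * ((real (Zc n E) - \<mu>)^2 * (4 / \<mu>^2))
       = (4 / \<mu>^2) * (W n q E * real (Zc n E) ^ 2 - 2 * \<mu> * (W n q E * real (Zc n E)) + \<mu>^2 * W n q E)"
      by (simp add: power2_diff algebra_simps)
    show ?thesis unfolding sum.cong[OF refl h]
      by (simp only: sum_distrib_left[symmetric] sum.distrib sum_subtractf)
  qed
  also have "\<dots> = (4 / \<mu>^2) * (real n * (1 - q) ^ (n - 1) + real n * (real n - 1) * (1 - q) ^ (2 * n - 3) - \<mu>^2)"
    using EZ EZ2 total1[of q] q unfolding \<mu>_def by (simp add: power2_eq_square)
  also have "\<dots> \<le> 4 / \<mu> + 4 * q / (1 - q)"
  proof -
    have p: "(1 - q) ^ (2 * n - 3) * (1 - q) = ((1 - q) ^ (n - 1))^2"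
    proof -
      have "2 * n - 3 + 1 = 2 * (n - 1)" using n by simp
      then show ?thesis by (metis power_Suc2 power_mult power_mult_distrib Suc_eq_plus1 mult.commute power2_eq_square power_add power_one_right)
    qed
    define p0 where "p0 = (1 - q) ^ (n - 1)"
    have e: "(1 - q) ^ (2 * n - 3) = p0^2 / (1 - q)" using p q unfolding p0_def by (simp add: field_simps)
    have mu': "\<mu> = real n * p0" unfolding \<mu>_def p0_def ..
    have "real n * p0 + real n * (real n - 1) * (p0^2 / (1 - q)) - \<mu>^2 \<le> \<mu> + \<mu>^2 * (q / (1 - q))"
    proof -
      have "real n * (real n - 1) * (p0^2 / (1 - q)) \<le> real n * real n * (p0^2 / (1 - q))"
        using q by (intro mult_right_mono) (auto intro: mult_left_mono)
      also have "\<dots> = \<mu>^2 + \<mu>^2 * (q / (1 - q))" using q unfolding mu' by (simp add: field_simps power2_eq_square)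
      finally show ?thesis unfolding mu' by simp
    qed
    then have "(4 / \<mu>^2) * (real n * p0 + real n * (real n - 1) * (p0^2 / (1 - q)) - \<mu>^2)
        \<le> (4 / \<mu>^2) * (\<mu> + \<mu>^2 * (q / (1 - q)))"
      using mu by (intro mult_left_mono) auto
    also have "\<dots> = 4 / \<mu> + 4 * q / (1 - q)" using mu by (simp add: field_simps power2_eq_square)
    finally show ?thesis unfolding e p0_def .
  qed
  finally show ?thesis .
qed



definition small :: "nat set set \<Rightarrow> nat \<Rightarrow> bool" where
  "small E v \<longleftrightarrow> (\<forall>u. {v, u} \<in> E \<longrightarrow> ((\<forall>w. {v, w} \<in> E \<longrightarrow> w = u) \<and> (\<forall>w. {u, w} \<in> E \<longrightarrow> w = v)))"

definition TT :: "nat \<Rightarrow> nat set set \<Rightarrow> nat set" where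
  "TT n E = {v \<in> {1..n}. small E v}"

definition HH :: "nat \<Rightarrow> nat set set \<Rightarrow> nat set set" where
  "HH n E = {e \<in> E. e \<inter> TT n E = {}}"

definition mm :: "nat \<Rightarrow> nat set set \<Rightarrow> nat set set" where
  "mm n E = {e \<in> E. e \<subseteq> TT n E}"

definition Match :: "nat \<Rightarrow> nat set \<Rightarrow> nat set set set" where
  "Match n T = {m. m \<subseteq> all_pairs n \<and> (\<forall>e\<in>m. e \<subseteq> T) \<and> is_matching m}"

lemma ap_elem: "e \<in> all_pairs n \<Longrightarrow> \<exists>i j. i \<in> {1..n} \<and> j \<in> {1..n} \<and> i \<noteq> j \<and> e = {i, j}"
  unfolding all_pairs_def by auto

lemma small_nb:
  assumes "small E i" "{i, j} \<in> E"
  shows "small E j"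
  unfolding small_def
proof (intro allI impI conjI)
  fix u w
  have A: "\<forall>w. {j, w} \<in> E \<longrightarrow> w = i" using assms unfolding small_def by blast
  have B: "\<forall>w. {i, w} \<in> E \<longrightarrow> w = j" using assms unfolding small_def by blast
  assume ju: "{j, u} \<in> E"
  then have ui: "u = i" using A by blast
  show "{j, w} \<in> E \<Longrightarrow> w = u" using A ui by blast
  show "{u, w} \<in> E \<Longrightarrow> w = j" using B ui by blast
qed

lemma C1:
  assumes "E \<subseteq> all_pairs n" "e \<in> E"
  shows "e \<subseteq> TT n E \<or> e \<inter> TT n E = {}"
proof -
  obtain i j where ij: "i \<in> {1..n}" "j \<in> {1..n}" "i \<noteq> j" "e = {i, j}"
    using ap_elem assms by blast
  have "i \<in> TT n E \<longleftrightarrow> j \<in> TT n E"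
  proof
    assume "i \<in> TT n E" then show "j \<in> TT n E" using small_nb[of E i j] assms ij unfolding TT_def by auto
  next
    assume "j \<in> TT n E" then show "i \<in> TT n E" using small_nb[of E j i] assms ij unfolding TT_def by (auto simp: insert_commute)
  qed
  then show ?thesis using ij by auto
qed

lemma mm_Match:
  assumes "E \<subseteq> all_pairs n"
  shows "mm n E \<in> Match n (TT n E)"
  unfolding Match_def is_matching_def
proof (intro CollectI conjI ballI impI)
  show "mm n E \<subseteq> all_pairs n" using assms unfolding mm_def by auto
  show "\<And>e. e \<in> mm n E \<Longrightarrow> e \<subseteq> TT n E" unfolding mm_def by auto
  fix e f assume ef: "e \<in> mm n E" "f \<in> mm n E" "e \<noteq> f"
  show "e \<inter> f = {}"
  proof (rule ccontr)
    assume "e \<inter> f \<noteq> {}"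
    then obtain x where x: "x \<in> e" "x \<in> f" by blast
    have pe: "\<And>e. e \<in> mm n E \<Longrightarrow> x \<in> e \<Longrightarrow> \<exists>a. e = {x, a}"
    proof -
      fix e assume "e \<in> mm n E" "x \<in> e"
      then obtain i j where "e = {i, j}" using assms ap_elem[of e n] unfolding mm_def by blast
      then show "\<exists>a. e = {x, a}" using \<open>x \<in> e\<close> by (metis insert_commute insertE singletonD)
    qed
    obtain a where a: "e = {x, a}" using pe ef(1) x(1) by blast
    obtain b where b: "f = {x, b}" using pe ef(2) x(2) by blast
    have "x \<in> TT n E" using ef(1) x unfolding mm_def by auto
    then have "small E x" unfolding TT_def by auto
    then have "b = a" using ef a b unfolding small_def mm_def by blast
    then show False using a b ef(3) by simp
  qed
qed

lemma E_split:
  assumes "E \<subseteq> all_pairs n"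
  shows "E = HH n E \<union> mm n E"
  using C1[OF assms] unfolding HH_def mm_def by blast

lemma nonempty_ap: "e \<in> all_pairs n \<Longrightarrow> e \<noteq> {}"
  unfolding all_pairs_def by auto

lemma C3:
  assumes E: "E \<subseteq> all_pairs n" and m: "m' \<in> Match n (TT n E)"
  defines "E' \<equiv> HH n E \<union> m'"
  shows "TT n E' = TT n E" "HH n E' = HH n E" "E' \<subseteq> all_pairs n"
proof -
  let ?T = "TT n E"
  have m'sub: "m' \<subseteq> all_pairs n" and m'T: "\<And>e. e \<in> m' \<Longrightarrow> e \<subseteq> ?T" and m'mat: "is_matching m'"
    using m unfolding Match_def by auto
  have Hdisj: "\<And>e. e \<in> HH n E \<Longrightarrow> e \<inter> ?T = {}" unfolding HH_def by auto
  show E'sub: "E' \<subseteq> all_pairs n" using E m'sub unfolding E'_def HH_def by auto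
  have inm: "\<And>v u. v \<in> ?T \<Longrightarrow> {v, u} \<in> E' \<Longrightarrow> {v, u} \<in> m'"
    using Hdisj unfolding E'_def by blast
  have mshare: "\<And>x a b. {x, a} \<in> m' \<Longrightarrow> {x, b} \<in> m' \<Longrightarrow> a = b"
  proof -
    fix x a b assume h: "{x, a} \<in> m'" "{x, b} \<in> m'"
    have "{x, a} = {x, b}"
    proof (rule ccontr)
      assume "{x, a} \<noteq> {x, b}"
      moreover have "\<forall>e\<in>m'. \<forall>f\<in>m'. e \<noteq> f \<longrightarrow> e \<inter> f = {}" using m'mat unfolding is_matching_def .
      ultimately have "{x, a} \<inter> {x, b} = {}" using h by (meson)
      then show False by auto
    qed
    then show "a = b" by (metis doubleton_eq_iff)
  qed
  show "TT n E' = ?T"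
  proof
    show "?T \<subseteq> TT n E'"
    proof
      fix v assume v: "v \<in> ?T"
      have "small E' v" unfolding small_def
      proof (intro allI impI conjI)
        fix u w assume vu: "{v, u} \<in> E'"
        then have vu': "{v, u} \<in> m'" using inm v by blast
        then have uT: "u \<in> ?T" using m'T by blast
        show "w = u" if "{v, w} \<in> E'"
          using mshare[OF vu' inm[OF v that]] by simp
        have uv: "{u, v} \<in> m'" using vu' by (simp add: insert_commute)
        show "w = v" if "{u, w} \<in> E'"
          using mshare[OF uv inm[OF uT that]] by simp
      qed
      then show "v \<in> TT n E'" using v unfolding TT_def by auto
    qed
    show "TT n E' \<subseteq> ?T"
    proof
      fix v assume v: "v \<in> TT n E'"
      show "v \<in> ?T"
      proof (rule ccontr)
        assume nv: "v \<notin> ?T"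
        have vn: "v \<in> {1..n}" using v unfolding TT_def by auto
        have "\<not> small E v" using nv vn unfolding TT_def by auto
        then obtain u where vu: "{v, u} \<in> E" and
          alt: "(\<exists>w. {v, w} \<in> E \<and> w \<noteq> u) \<or> (\<exists>w. {u, w} \<in> E \<and> w \<noteq> v)"
          unfolding small_def by blast
        have toH: "\<And>e. e \<in> E \<Longrightarrow> e \<inter> ?T \<noteq> {} \<Longrightarrow> e \<subseteq> ?T" using C1[OF E] by blast
        have inH: "\<And>e. e \<in> E \<Longrightarrow> \<not> e \<subseteq> ?T \<Longrightarrow> e \<in> E'"
          using C1[OF E] unfolding E'_def HH_def by blast
        have vuE': "{v, u} \<in> E'" using inH[OF vu] nv by simp
        have uT: "u \<notin> ?T" using toH[OF vu] nv by auto
        have "(\<exists>w. {v, w} \<in> E' \<and> w \<noteq> u) \<or> (\<exists>w. {u, w} \<in> E' \<and> w \<noteq> v)"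
        proof (cases "\<exists>w. {v, w} \<in> E \<and> w \<noteq> u")
          case True
          then obtain w where w: "{v, w} \<in> E" "w \<noteq> u" by blast
          have "\<not> {v, w} \<subseteq> ?T" using nv by simp
          then show ?thesis using inH[OF w(1)] w(2) by blast
        next
          case False
          then obtain w where w: "{u, w} \<in> E" "w \<noteq> v" using alt by blast
          have "\<not> {u, w} \<subseteq> ?T" using uT by simp
          then show ?thesis using inH[OF w(1)] w(2) by blast
        qed
        then have "\<not> small E' v" using vuE' unfolding small_def by blast
        then show False using v unfolding TT_def by auto
      qed
    qed
  qed
  then show "HH n E' = HH n E"
  proof -
    have "\<And>e. e \<in> m' \<Longrightarrow> e \<inter> ?T \<noteq> {}" using m'T m'sub nonempty_ap by (metis Int_absorb2 subsetD)
    then show ?thesis unfolding HH_def[of n E'] \<open>TT n E' = ?T\<close> unfolding E'_def HH_def by blast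
  qed
qed

lemma Zc_le_T: "Zc n E \<le> card (TT n E)"
  unfolding Zc_def TT_def
  by (rule card_mono) (auto simp: small_def iso_def)

lemma fiber:
  assumes E0: "E0 \<subseteq> all_pairs n"
  shows "{E. E \<subseteq> all_pairs n \<and> TT n E = TT n E0 \<and> HH n E = HH n E0}
           = (\<lambda>m. HH n E0 \<union> m) ` Match n (TT n E0)"
    and "inj_on (\<lambda>m. HH n E0 \<union> m) (Match n (TT n E0))"
proof -
  show "{E. E \<subseteq> all_pairs n \<and> TT n E = TT n E0 \<and> HH n E = HH n E0}
           = (\<lambda>m. HH n E0 \<union> m) ` Match n (TT n E0)"
  proof
    show "{E. E \<subseteq> all_pairs n \<and> TT n E = TT n E0 \<and> HH n E = HH n E0} \<subseteq> (\<lambda>m. HH n E0 \<union> m) ` Match n (TT n E0)"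
    proof
      fix E assume "E \<in> {E. E \<subseteq> all_pairs n \<and> TT n E = TT n E0 \<and> HH n E = HH n E0}"
      then have h: "E \<subseteq> all_pairs n" "TT n E = TT n E0" "HH n E = HH n E0" by auto
      have "E = HH n E0 \<union> mm n E" using E_split[OF h(1)] h(3) by simp
      moreover have "mm n E \<in> Match n (TT n E0)" using mm_Match[OF h(1)] h(2) by simp
      ultimately show "E \<in> (\<lambda>m. HH n E0 \<union> m) ` Match n (TT n E0)" by blast
    qed
    show "(\<lambda>m. HH n E0 \<union> m) ` Match n (TT n E0) \<subseteq> {E. E \<subseteq> all_pairs n \<and> TT n E = TT n E0 \<and> HH n E = HH n E0}"
      using C3[OF E0] by blast
  qed
  show "inj_on (\<lambda>m. HH n E0 \<union> m) (Match n (TT n E0))"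
  proof (rule inj_onI)
    fix m1 m2 assume m: "m1 \<in> Match n (TT n E0)" "m2 \<in> Match n (TT n E0)" and eq: "HH n E0 \<union> m1 = HH n E0 \<union> m2"
    have d: "\<And>m. m \<in> Match n (TT n E0) \<Longrightarrow> HH n E0 \<inter> m = {}"
      unfolding Match_def HH_def using nonempty_ap by fastforce
    show "m1 = m2" using d[OF m(1)] d[OF m(2)] eq by blast
  qed
qed

lemma finite_Match: "finite (Match n T)"
  unfolding Match_def by (rule finite_subset[of _ "Pow (all_pairs n)"]) (auto simp: finite_all_pairs)

lemma HH_disj: "e \<in> HH n E \<Longrightarrow> e \<inter> TT n E = {}" unfolding HH_def by auto

lemma matching_number_union:
  assumes H: "H \<subseteq> all_pairs n" and m: "m \<in> Match n T" and HT: "\<And>e. e \<in> H \<Longrightarrow> e \<inter> T = {}"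
  shows "matching_number (H \<union> m) = matching_number H + card m"
proof -
  have fH: "finite H" using H finite_all_pairs finite_subset by blast
  have m': "m \<subseteq> all_pairs n" "\<And>e. e \<in> m \<Longrightarrow> e \<subseteq> T" "is_matching m" using m unfolding Match_def by auto
  have fm: "finite m" using m'(1) finite_all_pairs finite_subset by blast
  have Hm: "H \<inter> m = {}" using HT m'(1,2) nonempty_ap by fastforce
  have fin: "\<And>G. finite G \<Longrightarrow> finite (card ` {F. F \<subseteq> G \<and> is_matching F})" by auto
  have ne: "\<And>G. {} \<in> {F. F \<subseteq> G \<and> is_matching F}" by (auto simp: is_matching_def)
  obtain FH where FH: "FH \<subseteq> H" "is_matching FH" "card FH = matching_number H"
  proof -
    have "matching_number H \<in> card ` {F. F \<subseteq> H \<and> is_matching F}"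
      unfolding matching_number_def using fin[OF fH] ne by (intro Max_in) auto
    then show ?thesis using that by auto
  qed
  have bound: "\<And>F. F \<subseteq> H \<Longrightarrow> is_matching F \<Longrightarrow> card F \<le> matching_number H"
    unfolding matching_number_def using fin[OF fH] by (intro Max_ge) auto
  show ?thesis unfolding matching_number_def[of "H \<union> m"]
  proof (rule Max_eqI)
    show "finite (card ` {F. F \<subseteq> H \<union> m \<and> is_matching F})" using fin fH fm by auto
  next
    fix y assume "y \<in> card ` {F. F \<subseteq> H \<union> m \<and> is_matching F}"
    then obtain F where F: "F \<subseteq> H \<union> m" "is_matching F" "y = card F" by auto
    have "card F \<le> card (F \<inter> H) + card (F \<inter> m)"
    proof -
      have "F = (F \<inter> H) \<union> (F \<inter> m)" using F(1) by blast
      then show ?thesis by (metis card_Un_le)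
    qed
    also have "card (F \<inter> H) \<le> matching_number H"
      using F(2) by (intro bound) (auto simp: is_matching_def)
    also have "card (F \<inter> m) \<le> card m" using fm by (intro card_mono) auto
    finally show "y \<le> matching_number H + card m" using F by simp
  next
    have "is_matching (FH \<union> m)" unfolding is_matching_def
    proof (intro ballI impI)
      fix e f assume ef: "e \<in> FH \<union> m" "f \<in> FH \<union> m" "e \<noteq> f"
      show "e \<inter> f = {}"
      proof (cases "e \<in> FH")
        case True
        show ?thesis
        proof (cases "f \<in> FH")
          case True then show ?thesis using \<open>e \<in> FH\<close> ef FH(2) unfolding is_matching_def by blast
        next
          case False then have "f \<in> m" using ef by blast
          then show ?thesis using HT[of e] \<open>e \<in> FH\<close> FH(1) m'(2)[of f] by blast
        qed
      next
        case False then have em: "e \<in> m" using ef by blast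
        show ?thesis
        proof (cases "f \<in> FH")
          case True then show ?thesis using HT[of f] FH(1) m'(2)[OF em] by blast
        next
          case False then have "f \<in> m" using ef by blast
          then show ?thesis using em ef m'(3) unfolding is_matching_def by blast
        qed
      qed
    qed
    moreover have "card (FH \<union> m) = matching_number H + card m"
      using FH Hm fm fH by (subst card_Un_disjoint) (auto intro: finite_subset)
    moreover have "FH \<union> m \<subseteq> H \<union> m" using FH by auto
    ultimately show "matching_number H + card m \<in> card ` {F. F \<subseteq> H \<union> m \<and> is_matching F}"
      by (metis (mono_tags, lifting) image_eqI mem_Collect_eq)
  qed
qed



definition MK :: "nat \<Rightarrow> nat set \<Rightarrow> nat \<Rightarrow> nat set set set" where
  "MK n T k = {m \<in> Match n T. card m = k}"

lemma ap_iff: "e \<in> all_pairs n \<longleftrightarrow> e \<subseteq> {1..n} \<and> card e = 2"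
proof
  assume "e \<in> all_pairs n" then show "e \<subseteq> {1..n} \<and> card e = 2" unfolding all_pairs_def by auto
next
  assume h: "e \<subseteq> {1..n} \<and> card e = 2"
  then obtain x y where "e = {x, y}" "x \<noteq> y" by (auto simp: card_2_iff)
  then show "e \<in> all_pairs n" using h unfolding all_pairs_def by auto
qed

lemma match_props:
  assumes "m \<in> Match n T"
  shows "m \<subseteq> all_pairs n" "\<And>e. e \<in> m \<Longrightarrow> e \<subseteq> T" "is_matching m" "finite m"
    "\<And>e. e \<in> m \<Longrightarrow> card e = 2"
  using assms finite_subset[OF _ finite_all_pairs] ap_iff unfolding Match_def by auto

lemma card_Union_match:
  assumes "m \<in> Match n T"
  shows "card (\<Union>m) = 2 * card m"
proof -
  have "pairwise disjnt m" using match_props(3)[OF assms] unfolding is_matching_def pairwise_def disjnt_def by blast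
  moreover have "\<And>A. A \<in> m \<Longrightarrow> finite A" using match_props(5)[OF assms] card_ge_0_finite by force
  ultimately have "card (\<Union>m) = sum card m" by (rule card_Union_disjoint)
  also have "\<dots> = sum (\<lambda>_. 2) m" using match_props(5)[OF assms] by (intro sum.cong) auto
  finally show ?thesis by simp
qed

lemma card_match_le:
  assumes "m \<in> Match n T" "finite T"
  shows "card m \<le> card T"
proof -
  have "\<Union>m \<subseteq> T" using match_props(2)[OF assms(1)] by blast
  then have "card (\<Union>m) \<le> card T" using assms(2) by (rule card_mono[rotated])
  then show ?thesis using card_Union_match[OF assms(1)] by simp
qed

lemma MK0: "MK n T 0 = {{}}"
proof -
  have "{} \<in> Match n T" unfolding Match_def is_matching_def by auto
  moreover have "\<And>m. m \<in> MK n T 0 \<Longrightarrow> m = {}" unfolding MK_def using match_props(4) by auto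
  ultimately show ?thesis unfolding MK_def by auto
qed

lemma finite_MK: "finite (MK n T k)" unfolding MK_def using finite_Match by auto

lemma MK_rec:
  assumes T: "T \<subseteq> {1..n}"
  shows "card (MK n T (Suc k)) * Suc k = card (MK n T k) * ((card T - 2 * k) choose 2)"
proof -
  have fT: "finite T" using T finite_subset by blast
  define X where "X = (SIGMA m:MK n T (Suc k). m)"
  define Y where "Y = (SIGMA m:MK n T k. {e. e \<subseteq> T - \<Union>m \<and> card e = 2})"
  have cX: "card X = card (MK n T (Suc k)) * Suc k"
  proof -
    have "card X = (\<Sum>m\<in>MK n T (Suc k). card m)" unfolding X_def
      using finite_MK match_props(4) unfolding MK_def by (intro card_SigmaI) auto
    also have "\<dots> = (\<Sum>m\<in>MK n T (Suc k). Suc k)" by (intro sum.cong) (auto simp: MK_def)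
    finally show ?thesis by simp
  qed
  have cY: "card Y = card (MK n T k) * ((card T - 2 * k) choose 2)"
  proof -
    have "card Y = (\<Sum>m\<in>MK n T k. card {e. e \<subseteq> T - \<Union>m \<and> card e = 2})" unfolding Y_def
      using finite_MK fT by (intro card_SigmaI) auto
    also have "\<dots> = (\<Sum>m\<in>MK n T k. (card T - 2 * k) choose 2)"
    proof (intro sum.cong refl)
      fix m assume m: "m \<in> MK n T k"
      then have mM: "m \<in> Match n T" and cm: "card m = k" unfolding MK_def by auto
      have sub: "\<Union>m \<subseteq> T" using match_props(2)[OF mM] by blast
      have "card (T - \<Union>m) = card T - 2 * k"
        using card_Diff_subset[OF finite_subset[OF sub fT] sub] card_Union_match[OF mM] cm by simp
      then show "card {e. e \<subseteq> T - \<Union>m \<and> card e = 2} = (card T - 2 * k) choose 2"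
        using n_subsets[of "T - \<Union>m" 2] fT by simp
    qed
    finally show ?thesis by simp
  qed
  define f where "f = (\<lambda>(m::nat set set, e::nat set). (m - {e}, e))"
  define g where "g = (\<lambda>(m::nat set set, e::nat set). (insert e m, e))"
  have "bij_betw f X Y"
  proof (rule bij_betw_byWitness[where f'=g])
    show "\<forall>a\<in>X. g (f a) = a" unfolding X_def f_def g_def by auto
    show "\<forall>a\<in>Y. f (g a) = a"
    proof
      fix a assume "a \<in> Y"
      then obtain m e where a: "a = (m, e)" and e: "e \<subseteq> T - \<Union>m" "card e = 2" unfolding Y_def by auto
      have "e \<noteq> {}" using e(2) by auto
      then have "e \<notin> m" using e(1) by blast
      then show "f (g a) = a" unfolding a f_def g_def by auto
    qed
    show "f ` X \<subseteq> Y"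
    proof
      fix b assume "b \<in> f ` X"
      then obtain m e where me: "m \<in> MK n T (Suc k)" "e \<in> m" and b: "b = (m - {e}, e)"
        unfolding X_def f_def by auto
      have mM: "m \<in> Match n T" and cm: "card m = Suc k" using me unfolding MK_def by auto
      note mp = match_props[OF mM]
      have "m - {e} \<in> Match n T" using mp unfolding Match_def is_matching_def by auto
      moreover have "card (m - {e}) = k" using cm me(2) mp(4) by simp
      ultimately have A: "m - {e} \<in> MK n T k" unfolding MK_def by simp
      have "e \<inter> \<Union>(m - {e}) = {}"
        using mp(3) me(2) unfolding is_matching_def by blast
      then have B: "e \<subseteq> T - \<Union>(m - {e})" using mp(2)[OF me(2)] by blast
      show "b \<in> Y" unfolding b Y_def using A B mp(5)[OF me(2)] by simp
    qed
    show "g ` Y \<subseteq> X"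
    proof
      fix b assume "b \<in> g ` Y"
      then obtain m e where m: "m \<in> MK n T k" and e: "e \<subseteq> T - \<Union>m" "card e = 2" and b: "b = (insert e m, e)"
        unfolding Y_def g_def by auto
      have mM: "m \<in> Match n T" and cm: "card m = k" using m unfolding MK_def by auto
      note mp = match_props[OF mM]
      have eap: "e \<in> all_pairs n" using e T ap_iff by blast
      have "e \<noteq> {}" using e(2) by auto
      then have enm: "e \<notin> m" using e(1) by blast
      have dis: "\<And>f. f \<in> m \<Longrightarrow> e \<inter> f = {}" using e(1) by blast
      have "is_matching (insert e m)" unfolding is_matching_def
      proof (intro ballI impI)
        fix x y assume xy: "x \<in> insert e m" "y \<in> insert e m" "x \<noteq> y"
        show "x \<inter> y = {}"
        proof (cases "x = e")
          case True then show ?thesis using xy dis by auto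
        next
          case False
          then have xm: "x \<in> m" using xy by auto
          show ?thesis
          proof (cases "y = e")
            case True then show ?thesis using dis[OF xm] by auto
          next
            case False then have "y \<in> m" using xy by auto
            then show ?thesis using xm xy(3) mp(3) unfolding is_matching_def by blast
          qed
        qed
      qed
      then have "insert e m \<in> Match n T" using mp eap e(1) unfolding Match_def by auto
      moreover have "card (insert e m) = Suc k" using enm mp(4) cm by simp
      ultimately show "b \<in> X" unfolding b X_def MK_def by simp
    qed
  qed
  then have "card X = card Y" by (rule bij_betw_same_card)
  then show ?thesis using cX cY by simp
qed

lemma sum_by_card:
  assumes "finite T"
  shows "(\<Sum>m\<in>Match n T. h (card m)) = (\<Sum>k\<le>card T. real (card (MK n T k)) * h k)"
proof -
  have "(\<Sum>m\<in>Match n T. h (card m)) = (\<Sum>k\<le>card T. \<Sum>m\<in>{m. m \<in> Match n T \<and> card m = k}. h (card m))"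
    using card_match_le[OF _ assms] finite_Match by (intro sum.group[symmetric]) auto
  also have "\<dots> = (\<Sum>k\<le>card T. real (card (MK n T k)) * h k)"
    by (intro sum.cong refl) (simp add: MK_def)
  finally show ?thesis .
qed



lemma real_choose2: "real (m choose 2) = real m * (real m - 1) / 2"
proof (induction m)
  case 0 then show ?case by simp
next
  case (Suc m)
  have "Suc m choose 2 = (m choose 1) + (m choose 2)" by (simp add: numeral_2_eq_2)
  then show ?case using Suc by (simp add: field_simps)
qed

lemma pow_le_exp: "0 \<le> x \<Longrightarrow> (1 + x) ^ m \<le> exp (real m * x)"
proof -
  assume x: "0 \<le> x"
  have "(1 + x) ^ m \<le> (exp x) ^ m" using x by (intro power_mono) (auto simp: exp_ge_add_one_self)
  also have "\<dots> = exp (real m * x)" by (simp add: exp_of_nat_mult)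
  finally show ?thesis .
qed

lemma window_card:
  "card {k::nat. k \<le> t \<and> x \<le> real k \<and> real k \<le> x + real l} \<le> l + 1"
proof -
  define c where "c = nat \<lceil>x\<rceil>"
  have "{k::nat. k \<le> t \<and> x \<le> real k \<and> real k \<le> x + real l} \<subseteq> {c..c + l}"
  proof
    fix k assume k: "k \<in> {k::nat. k \<le> t \<and> x \<le> real k \<and> real k \<le> x + real l}"
    then have "x \<le> real k" "real k \<le> x + real l" by auto
    then have a: "\<lceil>x\<rceil> \<le> int k" by (simp add: ceiling_le_iff)
    have "real k \<le> real_of_int (\<lceil>x\<rceil> + int l)" using \<open>real k \<le> x + real l\<close> le_of_int_ceiling[of x] by simp linarith
    then have b: "int k \<le> \<lceil>x\<rceil> + int l" by linarith
    show "k \<in> {c..c + l}" unfolding c_def atLeastAtMost_iff using a b by (intro conjI) (simp_all add: nat_le_iff le_nat_iff)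
  qed
  then have "card {k::nat. k \<le> t \<and> x \<le> real k \<and> real k \<le> x + real l} \<le> card {c..c + l}"
    by (intro card_mono) auto
  then show ?thesis by simp
qed



lemma anti1d:
  fixes a :: "nat \<Rightarrow> real" and \<rho> :: real and t s l :: nat and x :: real
  assumes a0: "a 0 > 0"
    and arec: "\<And>k. a (Suc k) * real (Suc k) = a k * real ((t - 2 * k) choose 2)"
    and rho: "\<rho> > 0" and t4: "real t \<ge> 4" and s1: "s \<ge> 1"
    and c1: "real (s * s + s) \<le> (real t)^2 * \<rho> / 16"
    and c2: "real (s * s + s) \<le> real t / 4"
    and c3: "(real (2 * s * (2 * s + 1) + 3))^2 \<le> (real t)^2 / 4"
    and c4: "(real (2 * s * (2 * s + 1) + 3))^2 \<le> real t / (2 * \<rho>)"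
  shows "(\<Sum>k\<in>{k. k \<le> t \<and> x \<le> real k \<and> real k \<le> x + real l}. a k * \<rho> ^ k)
           \<le> (real l + 1) * exp 2 / (real s + 1) * (\<Sum>k\<le>t. a k * \<rho> ^ k)"
proof -
  define w where "w k = a k * \<rho> ^ k" for k
  have anonneg: "a k \<ge> 0" for k
  proof (induction k)
    case 0 then show ?case using a0 by simp
  next
    case (Suc k)
    have "a (Suc k) * real (Suc k) \<ge> 0" using arec[of k] Suc by simp
    then show ?case by (simp add: zero_le_mult_iff)
  qed
  have wnn: "w k \<ge> 0" for k unfolding w_def using anonneg rho by simp
  have wstep: "w (Suc k) = w k * (real ((t - 2 * k) choose 2) * \<rho> / real (Suc k))" for k
  proof -
    have "a (Suc k) = a k * real ((t - 2 * k) choose 2) / real (Suc k)"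
      using arec[of k] by (simp add: field_simps)
    then show ?thesis unfolding w_def by (simp add: field_simps)
  qed
  obtain K where K: "K \<le> t" "\<And>k. k \<le> t \<Longrightarrow> w k \<le> w K"
  proof -
    have fin: "finite (w ` {..t})" by simp
    have "Max (w ` {..t}) \<in> w ` {..t}" by (rule Max_in) auto
    then obtain K where "K \<in> {..t}" "Max (w ` {..t}) = w K" by (rule imageE)
    moreover have "\<And>k. k \<le> t \<Longrightarrow> w k \<le> Max (w ` {..t})" by (rule Max_ge) auto
    ultimately show ?thesis using that by auto
  qed
  have wK: "w K > 0" using K(2)[of 0] a0 unfolding w_def by simp
  have aK: "a K > 0" using wK rho unfolding w_def by (simp add: zero_less_mult_iff)
  have tK: "2 * K \<le> t"
  proof (cases K)
    case 0 then show ?thesis by simp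
  next
    case (Suc k)
    have "a K * real K > 0" using aK Suc by simp
    then have "a k * real ((t - 2 * k) choose 2) > 0" using arec[of k] Suc by simp
    then have "real ((t - 2 * k) choose 2) > 0" using anonneg[of k] by (simp add: zero_less_mult_iff)
    then have "t - 2 * k \<ge> 2" by (metis of_nat_0_less_iff zero_less_binomial_iff)
    then show ?thesis using Suc by simp
  qed
  define u where "u = t - 2 * K"
  have tu: "t = 2 * K + u" using tK unfolding u_def by simp
  define U where "U = real u"
  define Kr where "Kr = real K"
  have tr: "real t = 2 * Kr + U" unfolding U_def Kr_def using tu by simp
  have i: "U * (U - 1) * \<rho> \<le> 2 * (Kr + 1)"
  proof -
    have "w (Suc K) \<le> w K"
    proof (cases "Suc K \<le> t")
      case True then show ?thesis using K(2) by simp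
    next
      case False
      then have "K = t" using K(1) by simp
      then have "t - 2 * K = 0" by simp
      then have "w (Suc K) = 0" using wstep[of K] by simp
      then show ?thesis using wK by simp
    qed
    then have "w K * (real (u choose 2) * \<rho> / real (Suc K)) \<le> w K * 1"
      using wstep[of K] unfolding u_def by simp
    then have "real (u choose 2) * \<rho> / real (Suc K) \<le> 1" using wK by (simp only: mult_le_cancel_left_pos)
    then have "real (u choose 2) * \<rho> \<le> real (Suc K)" by (simp add: field_simps)
    then show ?thesis unfolding real_choose2 U_def Kr_def by (simp add: field_simps)
  qed
  have ii: "K \<ge> 1 \<Longrightarrow> (U + 2) * (U + 1) * \<rho> \<ge> 2 * Kr"
  proof -
    assume K1: "K \<ge> 1"
    then obtain k where k: "K = Suc k" by (cases K) auto
    have wk: "w k > 0"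
    proof -
      have "w K = w k * (real ((t - 2 * k) choose 2) * \<rho> / real (Suc k))" using wstep[of k] k by simp
      then have "w k \<noteq> 0" using wK by auto
      then show ?thesis using wnn[of k] by simp
    qed
    have tk: "t - 2 * k = u + 2" unfolding u_def using tK k by simp
    have "w k \<le> w K" using K k by simp
    then have "w k * 1 \<le> w k * (real ((u + 2) choose 2) * \<rho> / real K)"
      using wstep[of k] k tk by simp
    then have "1 \<le> real ((u + 2) choose 2) * \<rho> / real K" using wk by (simp only: mult_le_cancel_left_pos)
    then have "real K \<le> real ((u + 2) choose 2) * \<rho>" using K1 by (simp add: field_simps)
    then show ?thesis unfolding real_choose2 U_def Kr_def by (simp add: field_simps)
  qed
  have U0: "U \<ge> 0" and K0: "Kr \<ge> 0" unfolding U_def Kr_def by auto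
  have cl1: "Kr + 1 \<ge> real (s * s + s)"
  proof (cases "U \<ge> real t / 2")
    case True
    have "real t / 2 - 1 \<ge> real t / 4" using t4 by simp
    then have "U * (U - 1) \<ge> (real t / 2) * (real t / 4)" using True t4
      by (intro mult_mono) auto
    then have "U * (U - 1) * \<rho> \<ge> (real t / 2) * (real t / 4) * \<rho>" using rho by (intro mult_right_mono) auto
    then have "Kr + 1 \<ge> (real t)^2 * \<rho> / 16" using i by (simp add: power2_eq_square field_simps)
    then show ?thesis using c1 by linarith
  next
    case False
    then have "Kr \<ge> real t / 4" using tr by simp
    then show ?thesis using c2 by linarith
  qed
  have cl2: "(U + 2)^2 \<ge> (real (2 * s * (2 * s + 1) + 3))^2"
  proof (cases "U \<ge> real t / 2")
    case True
    then have "(U + 2)^2 \<ge> (real t / 2)^2" using t4 by (intro power_mono) auto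
    then show ?thesis using c3 by (simp add: power_divide)
  next
    case False
    then have Kt: "2 * Kr > real t / 2" using tr by simp
    then have "K \<ge> 1" unfolding Kr_def using t4 by (cases K) auto
    then have "(U + 2) * (U + 1) * \<rho> \<ge> 2 * Kr" by (rule ii)
    moreover have "(U + 2)^2 * \<rho> \<ge> (U + 2) * (U + 1) * \<rho>" using U0 rho
      by (intro mult_right_mono) (auto simp: power2_eq_square)
    ultimately have "(U + 2)^2 * \<rho> \<ge> real t / 2" using Kt by linarith
    then have "(U + 2)^2 \<ge> real t / (2 * \<rho>)" using rho by (simp add: field_simps)
    then show ?thesis using c4 by linarith
  qed
  define S2 where "S2 = real (2 * s * (2 * s + 1))"
  have S2pos: "S2 \<ge> 6" unfolding S2_def using s1
  proof -
    have "2 * s * (2 * s + 1) \<ge> 2 * 1 * (2 * 1 + 1)" using s1 by (intro mult_mono add_mono) auto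
    then have "2 * s * (2 * s + 1) \<ge> 6" by simp
    then show "real (2 * s * (2 * s + 1)) \<ge> 6" by linarith
  qed
  have Ubig: "U - 1 \<ge> S2"
  proof -
    have "U + 2 \<ge> real (2 * s * (2 * s + 1) + 3)" using power2_le_imp_le[OF cl2] U0 by simp
    then show ?thesis unfolding S2_def by simp
  qed
  have Kbig: "Kr - real s + 1 \<ge> real s * real s" using cl1 by simp
  have Ks: "K \<ge> s"
  proof -
    have "real s * real s \<ge> real s" using s1 by (simp add: mult_le_cancel_right1 )
    then have "Kr \<ge> real s" using Kbig s1 by linarith
    then show ?thesis unfolding Kr_def by simp
  qed
  define A where "A = 1 + (2 * real s + 1) / (U - 1)"
  define B where "B = 1 + real s / (Kr - real s + 1)"
  define \<beta> where "\<beta> = A^2 * B"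
  have Upos: "U - 1 > 0" using Ubig S2pos by linarith
  have KSpos: "Kr - real s + 1 > 0" using Ks unfolding Kr_def by simp
  have A1: "A \<ge> 1" unfolding A_def using Upos by simp
  have B1: "B \<ge> 1" unfolding B_def using KSpos by simp
  have beta1: "\<beta> \<ge> 1"
  proof -
    have A2: "A^2 \<ge> 1" using A1 by (simp add: one_le_power)
    show ?thesis unfolding \<beta>_def using mult_mono[OF A2 B1] by simp
  qed
  have step: "w (K - i) \<le> \<beta> * w (K - Suc i)" if iS: "i < s" for i
  proof -
    define j where "j = K - Suc i"
    have jK: "Suc j = K - i" unfolding j_def using iS Ks by simp
    have tj: "t - 2 * j = u + 2 * i + 2" unfolding j_def u_def using iS Ks tK by simp
    have "w (K - i) = w j * (real ((u + 2 * i + 2) choose 2) * \<rho> / real (Suc j))"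
      using wstep[of j] jK tj by simp
    also have "\<dots> \<le> w j * \<beta>"
    proof (intro mult_left_mono wnn)
      have ir: "real i \<le> real s - 1" using iS by linarith
      have rj: "real (Suc j) = Kr - real i" using jK unfolding Kr_def using iS Ks by simp
      have rjpos: "Kr - real i > 0" using rj by (metis of_nat_0_less_iff zero_less_Suc)
      have "real ((u + 2 * i + 2) choose 2) = (U + 2 * real i + 2) * (U + 2 * real i + 1) / 2"
        unfolding real_choose2 U_def by (simp add: algebra_simps)
      also have "\<dots> \<le> (U + 2 * real s) * (U + 2 * real s) / 2"
        using ir U0 by (intro divide_right_mono mult_mono) auto
      also have "\<dots> \<le> A^2 * (U * (U - 1)) / 2"
      proof -
        have Aeq: "A = (U + 2 * real s) / (U - 1)" unfolding A_def using Upos by (simp add: field_simps)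
        have hl: "\<And>X D U::real. D \<noteq> 0 \<Longrightarrow> (X / D)^2 * (U * D) = X^2 * (U / D)"
          by (simp add: power2_eq_square field_simps)
        have "A^2 * (U * (U - 1)) = (U + 2 * real s)^2 * (U / (U - 1))"
          unfolding Aeq using Upos by (intro hl) simp
        also have "\<dots> \<ge> (U + 2 * real s)^2 * 1" using Upos U0
          by (intro mult_left_mono) (auto simp: field_simps)
        finally show ?thesis by (simp add: power2_eq_square)
      qed
      finally have ch0: "real ((u + 2 * i + 2) choose 2) \<le> A^2 * (U * (U - 1)) / 2" .
      have "real ((u + 2 * i + 2) choose 2) * \<rho> \<le> A^2 * (U * (U - 1)) / 2 * \<rho>"
        using rho by (intro mult_right_mono[OF ch0]) auto
      also have "\<dots> = A^2 * (U * (U - 1) * \<rho> / 2)" by simp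
      also have "\<dots> \<le> A^2 * (Kr + 1)" using i by (intro mult_left_mono) auto
      finally have ch: "real ((u + 2 * i + 2) choose 2) * \<rho> \<le> A^2 * (Kr + 1)" .
      have "(Kr + 1) / (Kr - real i) \<le> B"
      proof -
        have "(Kr + 1) / (Kr - real i) = 1 + (real i + 1) / (Kr - real i)" using rjpos by (simp add: field_simps)
        also have "\<dots> \<le> 1 + real s / (Kr - real s + 1)"
          using ir KSpos by (intro add_left_mono frac_le) auto
        finally show ?thesis unfolding B_def .
      qed
      then have "real ((u + 2 * i + 2) choose 2) * \<rho> / real (Suc j) \<le> A^2 * (Kr + 1) / (Kr - real i)"
        using ch rj rjpos by (simp add: divide_right_mono)
      also have "\<dots> = A^2 * ((Kr + 1) / (Kr - real i))" by simp
      also have "\<dots> \<le> A^2 * B" using \<open>(Kr + 1) / (Kr - real i) \<le> B\<close> by (intro mult_left_mono) auto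
      finally show "real ((u + 2 * i + 2) choose 2) * \<rho> / real (Suc j) \<le> \<beta>" unfolding \<beta>_def .
    qed
    finally show ?thesis unfolding j_def by (simp add: mult.commute)
  qed
  have desc: "w K \<le> \<beta> ^ i * w (K - i)" if "i \<le> s" for i
    using that
  proof (induction i)
    case 0 then show ?case by simp
  next
    case (Suc i)
    then have "w K \<le> \<beta> ^ i * w (K - i)" by simp
    also have "\<dots> \<le> \<beta> ^ i * (\<beta> * w (K - Suc i))"
      using step[of i] Suc.prems beta1 by (intro mult_left_mono) auto
    finally show ?case by (simp add: ac_simps)
  qed
  have betas: "\<beta> ^ s \<le> exp 2"
  proof -
    have "A ^ (2 * s) \<le> exp (real (2 * s) * ((2 * real s + 1) / (U - 1)))"
      unfolding A_def using Upos by (intro pow_le_exp) auto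
    also have "\<dots> \<le> exp 1"
    proof -
      have "real (2 * s) * ((2 * real s + 1) / (U - 1)) = S2 / (U - 1)" unfolding S2_def by (simp add: ring_distribs)
      also have "\<dots> \<le> 1" using Ubig Upos by simp
      finally show ?thesis by simp
    qed
    finally have a: "A ^ (2 * s) \<le> exp 1" .
    have "B ^ s \<le> exp (real s * (real s / (Kr - real s + 1)))"
      unfolding B_def using KSpos by (intro pow_le_exp) auto
    also have "\<dots> \<le> exp 1"
    proof -
      have "real s * (real s / (Kr - real s + 1)) \<le> 1" using Kbig KSpos by (simp add: field_simps)
      then show ?thesis by simp
    qed
    finally have b: "B ^ s \<le> exp 1" .
    have "\<beta> ^ s = A ^ (2 * s) * B ^ s" unfolding \<beta>_def by (simp add: power_mult_distrib power_mult)
    also have "\<dots> \<le> exp 1 * exp 1" using a b A1 B1 by (intro mult_mono) auto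
    also have "\<dots> = exp 2" by (simp add: exp_add[symmetric])
    finally show ?thesis .
  qed
  have lowK: "w K \<le> exp 2 * w (K - i)" if "i \<le> s" for i
  proof -
    have "w K \<le> \<beta> ^ i * w (K - i)" using desc that .
    also have "\<dots> \<le> \<beta> ^ s * w (K - i)"
      using beta1 that wnn by (intro mult_right_mono power_increasing) auto
    also have "\<dots> \<le> exp 2 * w (K - i)" using betas wnn by (intro mult_right_mono) auto
    finally show ?thesis .
  qed
  have total: "(real s + 1) * w K \<le> exp 2 * (\<Sum>k\<le>t. w k)"
  proof -
    have "(real s + 1) * w K = (\<Sum>i\<le>s. w K)" by simp
    also have "\<dots> \<le> (\<Sum>i\<le>s. exp 2 * w (K - i))" by (intro sum_mono lowK) auto
    also have "\<dots> = exp 2 * (\<Sum>i\<le>s. w (K - i))" by (simp add: sum_distrib_left)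
    also have "(\<Sum>i\<le>s. w (K - i)) = (\<Sum>k\<in>(\<lambda>i. K - i) ` {..s}. w k)"
    proof -
      have "inj_on (\<lambda>i. K - i) {..s}" using Ks by (auto simp: inj_on_def)
      then show ?thesis by (simp add: sum.reindex)
    qed
    also have "\<dots> \<le> (\<Sum>k\<le>t. w k)" using K(1) wnn by (intro sum_mono2) auto
    finally show ?thesis by (simp add: mult_left_mono)
  qed
  define Wn where "Wn = {k. k \<le> t \<and> x \<le> real k \<and> real k \<le> x + real l}"
  have "(\<Sum>k\<in>Wn. w k) \<le> (\<Sum>k\<in>Wn. w K)" using K unfolding Wn_def by (intro sum_mono) auto
  also have "\<dots> = real (card Wn) * w K" by simp
  also have "\<dots> \<le> (real l + 1) * w K"
    using window_card[of t x l] wK unfolding Wn_def by (intro mult_right_mono) auto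
  also have "\<dots> \<le> (real l + 1) * (exp 2 * (\<Sum>k\<le>t. w k) / (real s + 1))"
    using total by (intro mult_left_mono) (auto simp: field_simps)
  finally show ?thesis unfolding Wn_def w_def by (simp add: field_simps)
qed



lemma W_union:
  assumes q: "0 < q" "q < 1" and H: "H \<subseteq> all_pairs n" and m: "m \<subseteq> all_pairs n" and d: "H \<inter> m = {}"
  shows "W n q (H \<union> m) = W n q H * (q / (1 - q)) ^ card m"
proof -
  have fH: "finite H" and fm: "finite m" using H m finite_all_pairs finite_subset by blast+
  have c: "card (H \<union> m) = card H + card m" using card_Un_disjoint[OF fH fm d] .
  have N: "card H + card m \<le> card (all_pairs n)"
    using c card_mono[OF finite_all_pairs, of "H \<union> m"] H m by simp
  have e: "card (all_pairs n) - card H = (card (all_pairs n) - (card H + card m)) + card m" using N by simp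
  have "W n q H * (q / (1 - q)) ^ card m
      = q ^ card H * q ^ card m * ((1 - q) ^ (card (all_pairs n) - (card H + card m)) * ((1 - q) ^ card m / (1 - q) ^ card m))"
    unfolding e power_add using q by (simp add: power_divide field_simps)
  also have "\<dots> = W n q (H \<union> m)" using q c by (simp add: power_add)
  finally show ?thesis by simp
qed

lemma fiber_bound:
  fixes a :: real and l s :: nat
  assumes E0: "E0 \<subseteq> all_pairs n" and q: "0 < q" "q < 1"
  defines "T \<equiv> TT n E0" and "H \<equiv> HH n E0" and "\<rho> \<equiv> q / (1 - q)"
  assumes t4: "real (card T) \<ge> 4" and s1: "s \<ge> 1"
    and c1: "real (s * s + s) \<le> (real (card T))^2 * \<rho> / 16"
    and c2: "real (s * s + s) \<le> real (card T) / 4"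
    and c3: "(real (2 * s * (2 * s + 1) + 3))^2 \<le> (real (card T))^2 / 4"
    and c4: "(real (2 * s * (2 * s + 1) + 3))^2 \<le> real (card T) / (2 * \<rho>)"
  shows "(\<Sum>m\<in>{m \<in> Match n T. a \<le> real (matching_number (H \<union> m)) \<and> real (matching_number (H \<union> m)) \<le> a + real l}. W n q (H \<union> m))
     \<le> (real l + 1) * exp 2 / (real s + 1) * (\<Sum>m\<in>Match n T. W n q (H \<union> m))"
proof -
  have Tn: "T \<subseteq> {1..n}" unfolding T_def TT_def by auto
  have fT: "finite T" using Tn finite_subset by blast
  have Hs: "H \<subseteq> all_pairs n" unfolding H_def HH_def using E0 by auto
  have HT: "\<And>e. e \<in> H \<Longrightarrow> e \<inter> T = {}" unfolding H_def T_def by (rule HH_disj)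
  have rho: "\<rho> > 0" unfolding \<rho>_def using q by simp
  have Wm: "W n q (H \<union> m) = W n q H * \<rho> ^ card m" if "m \<in> Match n T" for m
  proof -
    have ms: "m \<subseteq> all_pairs n" using match_props(1)[OF that] .
    have "H \<inter> m = {}" using HT match_props(2)[OF that] nonempty_ap ms by fastforce
    then show ?thesis unfolding \<rho>_def using W_union[OF q Hs ms] by simp
  qed
  have MN: "matching_number (H \<union> m) = matching_number H + card m" if "m \<in> Match n T" for m
    using matching_number_union[OF Hs that HT] .
  define x where "x = a - real (matching_number H)"
  define A where "A k = real (card (MK n T k))" for k
  have WH: "W n q H \<ge> 0" using q by simp
  have lhs: "(\<Sum>m\<in>{m \<in> Match n T. a \<le> real (matching_number (H \<union> m)) \<and> real (matching_number (H \<union> m)) \<le> a + real l}. W n q (H \<union> m))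
      = W n q H * (\<Sum>k\<in>{k. k \<le> card T \<and> x \<le> real k \<and> real k \<le> x + real l}. A k * \<rho> ^ k)"
  proof -
    have "(\<Sum>m\<in>{m \<in> Match n T. a \<le> real (matching_number (H \<union> m)) \<and> real (matching_number (H \<union> m)) \<le> a + real l}. W n q (H \<union> m))
        = (\<Sum>m\<in>{m \<in> Match n T. x \<le> real (card m) \<and> real (card m) \<le> x + real l}. W n q H * \<rho> ^ card m)"
      by (intro sum.cong) (auto simp: MN Wm x_def)
    also have "\<dots> = (\<Sum>m\<in>Match n T. (if x \<le> real (card m) \<and> real (card m) \<le> x + real l then W n q H * \<rho> ^ card m else 0))"
      by (rule sum.inter_filter) (rule finite_Match)
    also have "\<dots> = (\<Sum>k\<le>card T. A k * (if x \<le> real k \<and> real k \<le> x + real l then W n q H * \<rho> ^ k else 0))"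
      unfolding A_def by (rule sum_by_card[OF fT])
    also have "\<dots> = (\<Sum>k\<le>card T. (if x \<le> real k \<and> real k \<le> x + real l then W n q H * (A k * \<rho> ^ k) else 0))"
      by (intro sum.cong refl) auto
    also have "\<dots> = (\<Sum>k\<in>{k\<in>{..card T}. x \<le> real k \<and> real k \<le> x + real l}. W n q H * (A k * \<rho> ^ k))"
      by (rule sum.inter_filter[symmetric]) simp
    also have "\<dots> = W n q H * (\<Sum>k\<in>{k. k \<le> card T \<and> x \<le> real k \<and> real k \<le> x + real l}. A k * \<rho> ^ k)"
      by (simp add: sum_distrib_left)
    finally show ?thesis .
  qed
  have rhs: "(\<Sum>m\<in>Match n T. W n q (H \<union> m)) = W n q H * (\<Sum>k\<le>card T. A k * \<rho> ^ k)"
  proof -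
    have "(\<Sum>m\<in>Match n T. W n q (H \<union> m)) = (\<Sum>m\<in>Match n T. W n q H * \<rho> ^ card m)"
      by (intro sum.cong) (auto simp: Wm)
    also have "\<dots> = (\<Sum>k\<le>card T. A k * (W n q H * \<rho> ^ k))"
      unfolding A_def by (rule sum_by_card[OF fT])
    also have "\<dots> = W n q H * (\<Sum>k\<le>card T. A k * \<rho> ^ k)"
      by (simp add: sum_distrib_left ac_simps)
    finally show ?thesis .
  qed
  have a0: "A 0 > 0" unfolding A_def MK0 by simp
  have arec: "\<And>k. A (Suc k) * real (Suc k) = A k * real ((card T - 2 * k) choose 2)"
  proof -
    fix k
    have "real (card (MK n T (Suc k)) * Suc k) = real (card (MK n T k) * ((card T - 2 * k) choose 2))"
      using MK_rec[OF Tn, of k] by simp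
    then show "A (Suc k) * real (Suc k) = A k * real ((card T - 2 * k) choose 2)"
      unfolding A_def by (simp only: of_nat_mult)
  qed
  have "(\<Sum>k\<in>{k. k \<le> card T \<and> x \<le> real k \<and> real k \<le> x + real l}. A k * \<rho> ^ k)
      \<le> (real l + 1) * exp 2 / (real s + 1) * (\<Sum>k\<le>card T. A k * \<rho> ^ k)"
    by (rule anti1d[OF a0 arec rho t4 s1 c1 c2 c3 c4])
  then have "W n q H * (\<Sum>k\<in>{k. k \<le> card T \<and> x \<le> real k \<and> real k \<le> x + real l}. A k * \<rho> ^ k)
      \<le> W n q H * ((real l + 1) * exp 2 / (real s + 1) * (\<Sum>k\<le>card T. A k * \<rho> ^ k))"
    using WH by (rule mult_left_mono)
  then show ?thesis unfolding lhs rhs by (simp add: ac_simps)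
qed



lemma main_bound:
  fixes a t0 q :: real and l s n :: nat
  assumes q: "0 < q" "q < 1" and s1: "s \<ge> 1"
    and cond: "\<And>t::nat. real t \<ge> t0 \<Longrightarrow> real t \<ge> 4
        \<and> real (s * s + s) \<le> (real t)^2 * (q / (1 - q)) / 16
        \<and> real (s * s + s) \<le> real t / 4
        \<and> (real (2 * s * (2 * s + 1) + 3))^2 \<le> (real t)^2 / 4
        \<and> (real (2 * s * (2 * s + 1) + 3))^2 \<le> real t / (2 * (q / (1 - q)))"
  shows "gnq_prob n q (\<lambda>E. a \<le> real (matching_number E) \<and> real (matching_number E) \<le> a + real l)
      \<le> (real l + 1) * exp 2 / (real s + 1) + (\<Sum>E\<in>{E. E \<subseteq> all_pairs n \<and> real (Zc n E) < t0}. W n q E)"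
proof -
  define P where "P E \<longleftrightarrow> a \<le> real (matching_number E) \<and> real (matching_number E) \<le> a + real l" for E
  define B where "B = (real l + 1) * exp 2 / (real s + 1)"
  define Bad where "Bad = {E. E \<subseteq> all_pairs n \<and> real (Zc n E) < t0}"
  define GA where "GA = {E. E \<subseteq> all_pairs n \<and> t0 \<le> real (card (TT n E))}"
  define G where "G = {E \<in> GA. P E}"
  define \<Phi> where "\<Phi> E = (TT n E, HH n E)" for E
  have wnn: "\<And>E. W n q E \<ge> 0" using q by simp
  have finP: "\<And>X. X \<subseteq> Pow (all_pairs n) \<Longrightarrow> finite X"
    using finite_all_pairs by (meson finite_Pow_iff finite_subset)
  have fBad: "finite Bad" and fG: "finite G" and fGA: "finite GA"
    unfolding Bad_def G_def GA_def by (auto intro!: finP)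
  have sub: "{E. E \<subseteq> all_pairs n \<and> P E} \<subseteq> Bad \<union> G"
  proof
    fix E assume E: "E \<in> {E. E \<subseteq> all_pairs n \<and> P E}"
    show "E \<in> Bad \<union> G"
    proof (cases "real (Zc n E) < t0")
      case True then show ?thesis using E unfolding Bad_def by auto
    next
      case False
      then have "t0 \<le> real (card (TT n E))" using Zc_le_T[of n E] by linarith
      then show ?thesis using E unfolding G_def GA_def by auto
    qed
  qed
  have "gnq_prob n q P \<le> (\<Sum>E\<in>Bad \<union> G. W n q E)"
    unfolding gnq_prob_def using sub fBad fG wnn by (intro sum_mono2) auto
  also have "\<dots> \<le> (\<Sum>E\<in>Bad. W n q E) + (\<Sum>E\<in>G. W n q E)"
  proof -
    have "(\<Sum>E\<in>Bad \<union> G. W n q E) + (\<Sum>E\<in>Bad \<inter> G. W n q E) = (\<Sum>E\<in>Bad. W n q E) + (\<Sum>E\<in>G. W n q E)"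
      by (rule sum.union_inter[OF fBad fG])
    moreover have "(\<Sum>E\<in>Bad \<inter> G. W n q E) \<ge> 0" using wnn by (intro sum_nonneg) auto
    ultimately show ?thesis by linarith
  qed
  also have "(\<Sum>E\<in>G. W n q E) \<le> B"
  proof -
    define R where "R = \<Phi> ` GA"
    have fR: "finite R" unfolding R_def using fGA by simp
    have gsplit: "(\<Sum>E\<in>G. W n q E) = (\<Sum>r\<in>R. \<Sum>E\<in>{x. x \<in> G \<and> \<Phi> x = r}. W n q E)"
      by (rule sum.group[symmetric, OF fG fR]) (auto simp: R_def G_def)
    have gasplit: "(\<Sum>E\<in>GA. W n q E) = (\<Sum>r\<in>R. \<Sum>E\<in>{x. x \<in> GA \<and> \<Phi> x = r}. W n q E)"
      by (rule sum.group[symmetric, OF fGA fR]) (auto simp: R_def)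
    have each: "(\<Sum>E\<in>{x. x \<in> G \<and> \<Phi> x = r}. W n q E) \<le> B * (\<Sum>E\<in>{x. x \<in> GA \<and> \<Phi> x = r}. W n q E)"
      if r: "r \<in> R" for r
    proof -
      obtain E0 where E0: "E0 \<in> GA" "r = \<Phi> E0" using r unfolding R_def by auto
      have E0s: "E0 \<subseteq> all_pairs n" and E0t: "t0 \<le> real (card (TT n E0))" using E0 unfolding GA_def by auto
      define T where "T = TT n E0"
      define H where "H = HH n E0"
      have fib: "{E. E \<subseteq> all_pairs n \<and> TT n E = T \<and> HH n E = H} = (\<lambda>m. H \<union> m) ` Match n T"
        and inj: "inj_on (\<lambda>m. H \<union> m) (Match n T)"
        using fiber[OF E0s] unfolding T_def H_def by auto
      have eqA: "{x. x \<in> GA \<and> \<Phi> x = r} = (\<lambda>m. H \<union> m) ` Match n T"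
      proof -
        have "{x. x \<in> GA \<and> \<Phi> x = r} = {E. E \<subseteq> all_pairs n \<and> TT n E = T \<and> HH n E = H}"
          unfolding GA_def E0(2) \<Phi>_def T_def H_def using E0t by auto
        then show ?thesis using fib by simp
      qed
      have eqG: "{x. x \<in> G \<and> \<Phi> x = r} = (\<lambda>m. H \<union> m) ` {m \<in> Match n T. P (H \<union> m)}"
      proof -
        have "{x. x \<in> G \<and> \<Phi> x = r} = {E \<in> {x. x \<in> GA \<and> \<Phi> x = r}. P E}" unfolding G_def by auto
        also have "\<dots> = (\<lambda>m. H \<union> m) ` {m \<in> Match n T. P (H \<union> m)}" unfolding eqA by auto
        finally show ?thesis .
      qed
      have inj2: "inj_on (\<lambda>m. H \<union> m) {m \<in> Match n T. P (H \<union> m)}" using inj by (rule inj_on_subset) auto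
      have c: "real (card T) \<ge> 4
        \<and> real (s * s + s) \<le> (real (card T))^2 * (q / (1 - q)) / 16
        \<and> real (s * s + s) \<le> real (card T) / 4
        \<and> (real (2 * s * (2 * s + 1) + 3))^2 \<le> (real (card T))^2 / 4
        \<and> (real (2 * s * (2 * s + 1) + 3))^2 \<le> real (card T) / (2 * (q / (1 - q)))"
        using cond E0t unfolding T_def by blast
      have fb: "(\<Sum>m\<in>{m \<in> Match n T. P (H \<union> m)}. W n q (H \<union> m)) \<le> B * (\<Sum>m\<in>Match n T. W n q (H \<union> m))"
        using fiber_bound[OF E0s q, of s a l] c s1 unfolding P_def B_def T_def H_def by blast
      show ?thesis unfolding eqA eqG sum.reindex[OF inj] sum.reindex[OF inj2] using fb by (simp add: o_def)
    qed
    have "(\<Sum>E\<in>G. W n q E) \<le> (\<Sum>r\<in>R. B * (\<Sum>E\<in>{x. x \<in> GA \<and> \<Phi> x = r}. W n q E))"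
      unfolding gsplit by (intro sum_mono each)
    also have "\<dots> = B * (\<Sum>E\<in>GA. W n q E)" unfolding gasplit by (simp add: sum_distrib_left)
    also have "\<dots> \<le> B * 1"
    proof -
      have "(\<Sum>E\<in>GA. W n q E) \<le> (\<Sum>E\<in>Pow (all_pairs n). W n q E)"
        using wnn finite_all_pairs unfolding GA_def by (intro sum_mono2) auto
      then have "(\<Sum>E\<in>GA. W n q E) \<le> 1" using total1[of q n] q by simp
      moreover have "B \<ge> 0" unfolding B_def by simp
      ultimately show ?thesis by (intro mult_left_mono)
    qed
    finally show ?thesis by simp
  qed
  finally show ?thesis unfolding P_def B_def Bad_def by (simp add: add.commute)
qed



lemma regime:
  fixes n :: nat and q :: real
  defines "L \<equiv> real n * sqrt q * exp (- q * real n)"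
  defines "X \<equiv> real n * exp (- q * real n)"
  assumes q: "0 \<le> q" "q \<le> 1" and LB: "L \<ge> 16"
  shows "0 < q" "q \<le> 1/2" "q \<le> 2 / sqrt L" "n \<ge> 16" "L = X * sqrt q" "X * q \<le> 1"
    "L\<^sup>2 \<le> X" "L \<le> X"
    "real n * (1 - q) ^ (n - 1) \<ge> exp (-8) * X"
proof -
  have sq1: "sqrt q \<le> 1" using q by simp
  have sq0: "sqrt q \<ge> 0" using q by simp
  show LX: "L = X * sqrt q" unfolding L_def X_def by simp
  have X0: "X \<ge> 0" unfolding X_def by simp
  have LleX: "L \<le> X" unfolding LX using X0 sq1 sq0 by (simp add: mult_left_le)
  then show "L \<le> X" .
  have Xn: "X \<le> real n" unfolding X_def using q by (simp add: mult_left_le)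
  have n16: "real n \<ge> 16" using LB LleX Xn by linarith
  then show "n \<ge> 16" by simp
  show "0 < q"
  proof (rule ccontr)
    assume "\<not> 0 < q" then have "q = 0" using q by simp
    then have "L = 0" unfolding L_def by simp
    then show False using LB by simp
  qed
  have npos: "real n > 0" using n16 by simp
  have "exp (q * real n) \<le> real n"
  proof -
    have "1 \<le> X" using LB LleX by linarith
    then have "1 * exp (q * real n) \<le> X * exp (q * real n)" by (intro mult_right_mono) auto
    also have "X * exp (q * real n) = real n" unfolding X_def by (simp add: exp_minus field_simps)
    finally show ?thesis by simp
  qed
  then have qn_ln: "q * real n \<le> ln (real n)" using npos by (simp add: ln_ge_iff)
  have "ln (real n) \<le> 2 * sqrt (real n)"
  proof -
    have "ln (sqrt (real n)) \<le> sqrt (real n) - 1" using npos by (intro ln_le_minus_one) simp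
    then show ?thesis using ln_sqrt[of "real n"] by simp
  qed
  then have qn: "q * real n \<le> 2 * sqrt (real n)" using qn_ln by linarith
  have sn: "sqrt (real n) > 0" using npos by simp
  have q2: "q \<le> 2 / sqrt (real n)"
  proof -
    have "q * (sqrt (real n) * sqrt (real n)) \<le> 2 * sqrt (real n)" using qn npos by simp
    then have "q * sqrt (real n) \<le> 2" using sn
      by (metis mult.assoc mult_le_cancel_right_pos)
    then show ?thesis using sn by (simp add: field_simps)
  qed
  have "2 / sqrt (real n) \<le> 2 / sqrt L" using LleX Xn LB sn by (intro divide_left_mono) auto
  then show "q \<le> 2 / sqrt L" using q2 by linarith
  have "2 / sqrt (real n) \<le> 2 / 4"
  proof -
    have "sqrt (real n) \<ge> sqrt 16" using n16 by (subst real_sqrt_le_iff) simp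
    then have "sqrt (real n) \<ge> 4" by simp
    then show ?thesis using npos by (intro divide_left_mono) auto
  qed
  then show qh: "q \<le> 1/2" using q2 by simp
  have Xq: "X * q \<le> 1"
  proof -
    have "X * q = (q * real n) * exp (- (q * real n))" unfolding X_def by simp
    also have "\<dots> \<le> exp (q * real n) * exp (- (q * real n))"
      using q by (intro mult_right_mono) (auto intro: order_trans[OF _ exp_ge_add_one_self])
    also have "\<dots> = 1" by (simp add: exp_minus)
    finally show ?thesis .
  qed
  then show "X * q \<le> 1" .
  have "L\<^sup>2 = X * (X * q)" unfolding LX using q by (simp add: power2_eq_square)
  also have "\<dots> \<le> X * 1" using Xq X0 by (intro mult_left_mono) auto
  finally show "L\<^sup>2 \<le> X" by simp
  have q2n: "q^2 * real n \<le> 4"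
  proof -
    have "(q * real n)^2 \<le> (2 * sqrt (real n))^2" using qn q npos by (intro power_mono) auto
    moreover have "(2 * sqrt (real n))^2 = 4 * real n" using npos by (simp add: power_mult_distrib)
    ultimately have h1: "(q * real n)^2 \<le> 4 * real n" by linarith
    have "q^2 * real n * real n = (q * real n)^2" by (simp add: power2_eq_square)
    then have "q^2 * real n * real n \<le> 4 * real n" using h1 by linarith
    then show ?thesis using npos by (simp add: mult_le_cancel_right_pos)
  qed
  have q1: "1 - q > 0" using qh by simp
  have "(1 - q) ^ n = exp (real n * ln (1 - q))" using q1 by (simp add: exp_of_nat_mult)
  also have "\<dots> \<ge> exp (real n * (- q - 2 * q^2))"
    using ln_one_minus_pos_lower_bound[OF q(1) qh] by (simp add: mult_left_mono)
  finally have a: "(1 - q) ^ n \<ge> exp (- (q * real n) - 2 * (q^2 * real n))" by (simp add: algebra_simps)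
  have "exp (- (q * real n) - 2 * (q^2 * real n)) \<ge> exp (- (q * real n) - 8)" using q2n by (simp add: mult.commute)
  also have "exp (- (q * real n) - 8) = exp (-8) * exp (- q * real n)" by (simp add: exp_add[symmetric])
  finally have b: "(1 - q) ^ n \<ge> exp (-8) * exp (- q * real n)" using a by linarith
  have "(1 - q) ^ n \<le> (1 - q) ^ (n - 1)" using q1 qh q by (intro power_decreasing) auto
  then have "(1 - q) ^ (n - 1) \<ge> exp (-8) * exp (- q * real n)" using b by linarith
  then have "real n * (1 - q) ^ (n - 1) \<ge> real n * (exp (-8) * exp (- q * real n))"
    using npos by (intro mult_left_mono) auto
  then show "real n * (1 - q) ^ (n - 1) \<ge> exp (-8) * X" unfolding X_def by (simp add: ac_simps)
qed



lemma conds: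
  fixes X L q g t :: real and s :: nat
  assumes g: "0 < g" "g \<le> 1" and q: "0 < q" "q \<le> 1/2"
    and XL: "L\<^sup>2 \<le> X" and Xq: "X * q \<le> 1" and LX: "L = X * sqrt q" and L0: "L \<ge> 0"
    and sL: "real s \<le> g / 16 * L" and s1: "s \<ge> 1" and t: "t \<ge> g * X / 2" and tb: "g * L\<^sup>2 / 2 \<ge> 4"
  shows "t \<ge> 4
        \<and> real (s * s + s) \<le> t^2 * (q / (1 - q)) / 16
        \<and> real (s * s + s) \<le> t / 4
        \<and> (real (2 * s * (2 * s + 1) + 3))^2 \<le> t^2 / 4
        \<and> (real (2 * s * (2 * s + 1) + 3))^2 \<le> t / (2 * (q / (1 - q)))"
proof -
  define S where "S = real s"
  have S1: "S \<ge> 1" unfolding S_def using s1 by simp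
  have X0: "X \<ge> 0" using XL by (metis zero_le_power2 order_trans)
  have L2: "L\<^sup>2 = X\<^sup>2 * q" unfolding LX using q by (simp add: power_mult_distrib)
  have tL: "t \<ge> g * L\<^sup>2 / 2" using t XL g by (smt (verit) divide_right_mono mult_left_mono)
  have t4: "t \<ge> 4" using tL tb by linarith
  have t0: "t \<ge> 0" using t4 by simp
  have SS: "S * S \<le> (g / 16 * L)\<^sup>2" using sL S1 unfolding S_def power2_eq_square
    by (intro mult_mono) auto
  have c12: "real (s * s + s) \<le> 2 * (g / 16 * L)\<^sup>2"
  proof -
    have "real (s * s + s) = S * S + S" unfolding S_def by simp
    also have "\<dots> \<le> 2 * (S * S)" using S1 by (simp add: mult_le_cancel_left1)
    finally show ?thesis using SS by linarith
  qed
  have rho: "q / (1 - q) \<ge> q" using q by (simp add: field_simps)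
  have c1: "real (s * s + s) \<le> t^2 * (q / (1 - q)) / 16"
  proof -
    have "t^2 \<ge> (g * X / 2)^2" using t g X0 by (intro power_mono) auto
    then have "t^2 * q \<ge> (g * X / 2)^2 * q" using q by (intro mult_right_mono) auto
    moreover have "(g * X / 2)^2 * q = g^2 * L\<^sup>2 / 4" unfolding L2 by (simp add: power_mult_distrib power_divide)
    moreover have "t^2 * (q / (1 - q)) \<ge> t^2 * q" using rho by (intro mult_left_mono) auto
    ultimately have "g^2 * L\<^sup>2 / 4 \<le> t^2 * (q / (1 - q))" by linarith
    then have "(g^2 * L\<^sup>2 / 4) / 16 \<le> t^2 * (q / (1 - q)) / 16" by (rule divide_right_mono) simp
    then have "t^2 * (q / (1 - q)) / 16 \<ge> g^2 * L\<^sup>2 / 64" by simp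
    moreover have "2 * (g / 16 * L)\<^sup>2 = g^2 * L\<^sup>2 / 128" by (simp add: power_mult_distrib power_divide)
    moreover have "g^2 * L\<^sup>2 / 128 \<le> g^2 * L\<^sup>2 / 64" by simp
    ultimately show ?thesis using c12 by linarith
  qed
  have c2: "real (s * s + s) \<le> t / 4"
  proof -
    have "2 * (g / 16 * L)\<^sup>2 = g * g * L\<^sup>2 / 128" by (simp add: power_mult_distrib power_divide power2_eq_square)
    also have "\<dots> \<le> g * 1 * L\<^sup>2 / 128" using g by (intro divide_right_mono mult_right_mono mult_left_mono) auto
    also have "\<dots> \<le> (g * L\<^sup>2 / 2) / 4" using g by (simp add: zero_le_mult_iff)
    also have "\<dots> \<le> t / 4" using tL by simp
    finally show ?thesis using c12 by linarith
  qed
  have A: "real (2 * s * (2 * s + 1) + 3) \<le> 9 * (g / 16 * L)\<^sup>2"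
  proof -
    have "real (2 * s * (2 * s + 1) + 3) = 4 * (S * S) + 2 * S + 3" unfolding S_def by (simp add: algebra_simps)
    also have "\<dots> \<le> 9 * (S * S)"
    proof -
      have "S \<le> S * S" using S1 by (simp add: mult_le_cancel_left1)
      then show ?thesis using S1 by linarith
    qed
    finally show ?thesis using SS by linarith
  qed
  have A0: "real (2 * s * (2 * s + 1) + 3) \<ge> 0" by simp
  have Asq: "(real (2 * s * (2 * s + 1) + 3))^2 \<le> 81 * (g / 16)^4 * (L\<^sup>2)^2"
  proof -
    have "(real (2 * s * (2 * s + 1) + 3))^2 \<le> (9 * (g / 16 * L)\<^sup>2)^2" using A A0 by (intro power_mono) auto
    also have "\<dots> = 81 * (g / 16)^4 * (L\<^sup>2)^2" by (simp add: power_mult_distrib power2_eq_square power_divide power4_eq_xxxx)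
    finally show ?thesis .
  qed
  have small: "81 * (g / 16)^4 \<le> g^2 / 16"
  proof -
    have "g^4 \<le> g^2" using g by (simp add: power_decreasing)
    moreover have "81 * (g / 16)^4 = 81 * g^4 / 65536" by (simp add: power_divide)
    moreover have "g^2 \<ge> 0" by simp
    ultimately show ?thesis by linarith
  qed
  have small2: "648 * (g / 16)^4 \<le> g"
  proof -
    have "g^4 \<le> g^1" using g by (intro power_decreasing) auto
    moreover have "648 * (g / 16)^4 = 648 * g^4 / 65536" by (simp add: power_divide)
    ultimately show ?thesis using g by simp
  qed
  have c3: "(real (2 * s * (2 * s + 1) + 3))^2 \<le> t^2 / 4"
  proof -
    have "t^2 \<ge> (g * L\<^sup>2 / 2)^2" using tL g by (intro power_mono) auto
    then have "t^2 / 4 \<ge> g^2 / 16 * (L\<^sup>2)^2" by (simp add: power_mult_distrib power_divide)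
    moreover have "81 * (g / 16)^4 * (L\<^sup>2)^2 \<le> g^2 / 16 * (L\<^sup>2)^2" using small by (intro mult_right_mono) auto
    ultimately show ?thesis using Asq by linarith
  qed
  have c4: "(real (2 * s * (2 * s + 1) + 3))^2 \<le> t / (2 * (q / (1 - q)))"
  proof -
    have "t / (2 * (q / (1 - q))) = t * (1 - q) / (2 * q)" using q by (simp add: field_simps)
    also have "\<dots> \<ge> t * (1/2) / (2 * q)" using q t0 by (intro divide_right_mono mult_left_mono) auto
    finally have a: "t / (2 * (q / (1 - q))) \<ge> t / (4 * q)" by simp
    have "t / (4 * q) \<ge> (g * X / 2) / (4 * q)" using t q by (intro divide_right_mono) auto
    then have b: "t / (2 * (q / (1 - q))) \<ge> g * X / (8 * q)" using a by simp
    have "(L\<^sup>2)^2 = X^4 * q^2" unfolding L2 by (simp add: power_mult_distrib power2_eq_square power4_eq_xxxx)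
    then have "81 * (g / 16)^4 * (L\<^sup>2)^2 * (8 * q) = 648 * (g / 16)^4 * (X * q)^3 * X"
      by (simp add: power_mult_distrib power2_eq_square power3_eq_cube power4_eq_xxxx)
    also have "\<dots> \<le> 648 * (g / 16)^4 * 1 * X"
    proof -
      have "(X * q)^3 \<le> 1" using Xq X0 q by (simp add: power_le_one)
      then show ?thesis using X0 by (intro mult_right_mono mult_left_mono) auto
    qed
    also have "\<dots> \<le> g * X" using small2 X0 by (simp add: mult_right_mono)
    finally have "81 * (g / 16)^4 * (L\<^sup>2)^2 \<le> g * X / (8 * q)" using q by (simp add: field_simps)
    then show ?thesis using Asq b by linarith
  qed
  show ?thesis using t4 c1 c2 c3 c4 by blast
qed



lemma lim_aux: "((\<lambda>y::real. K / y + 16 / sqrt y) \<longlongrightarrow> 0) at_top"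
proof -
  have a: "((\<lambda>y::real. K / y) \<longlongrightarrow> 0) at_top"
    by (rule tendsto_divide_0[OF tendsto_const filterlim_at_top_imp_at_infinity[OF filterlim_ident]])
  have b: "((\<lambda>y::real. 16 / sqrt y) \<longlongrightarrow> 0) at_top"
    by (rule tendsto_divide_0[OF tendsto_const filterlim_at_top_imp_at_infinity[OF sqrt_at_top]])
  show ?thesis using tendsto_add[OF a b] by simp
qed

theorem lemma10:
  fixes q :: "nat \<Rightarrow> real"
  assumes q_range: "\<And>n. 0 \<le> q n \<and> q n \<le> 1"
    and q_growth: "filterlim (\<lambda>n. real n * sqrt (q n) * exp (- q n * real n)) at_top sequentially"
  shows "\<forall>\<epsilon>>0. \<exists>d>0. \<exists>\<delta> :: nat \<Rightarrow> real. \<delta> \<longlonglongrightarrow> 0 \<and>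
           (\<forall>n. \<forall>a :: real.
              gnq_prob n (q n)
                (\<lambda>E. a \<le> real (matching_number E) \<and>
                     real (matching_number E) \<le> a + of_int \<lfloor>d * real n * sqrt (q n) * exp (- q n * real n)\<rfloor>)
              \<le> \<epsilon> + \<delta> n)"
proof (intro allI impI)
  fix \<epsilon> :: real assume eps: "\<epsilon> > 0"
  define g where "g = exp (-8::real)"
  define c where "c = g / 16"
  define d where "d = \<epsilon> * c / exp 2"
  define L where "L n = real n * sqrt (q n) * exp (- q n * real n)" for n
  define B0 where "B0 = 16 / g + 16"
  define K where "K = exp 2 / c + 4 / g"
  define f where "f y = (if y \<ge> B0 then K / y + 16 / sqrt y else 1)" for y
  define \<delta> where "\<delta> n = f (L n)" for n
  have g0: "g > 0" "g \<le> 1" unfolding g_def by auto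
  have c0: "c > 0" unfolding c_def using g0 by simp
  have d0: "d > 0" unfolding d_def using eps c0 by simp
  have flim: "(f \<longlongrightarrow> 0) at_top"
  proof -
    have "eventually (\<lambda>y. K / y + 16 / sqrt y = f y) at_top"
      using eventually_ge_at_top[of B0] unfolding f_def by eventually_elim simp
    then show ?thesis using lim_aux[of K] by (rule tendsto_cong[THEN iffD1])
  qed
  have Llim: "filterlim L at_top sequentially" unfolding L_def using q_growth .
  have dlim: "\<delta> \<longlonglongrightarrow> 0" unfolding \<delta>_def using filterlim_compose[OF flim Llim] .
  have main: "gnq_prob n (q n)
                (\<lambda>E. a \<le> real (matching_number E) \<and>
                     real (matching_number E) \<le> a + of_int \<lfloor>d * real n * sqrt (q n) * exp (- q n * real n)\<rfloor>)
              \<le> \<epsilon> + \<delta> n" for n a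
  proof (cases "L n \<ge> B0")
    case False
    then have "\<delta> n = 1" unfolding \<delta>_def f_def by simp
    moreover have "gnq_prob n (q n)
                (\<lambda>E. a \<le> real (matching_number E) \<and>
                     real (matching_number E) \<le> a + of_int \<lfloor>d * real n * sqrt (q n) * exp (- q n * real n)\<rfloor>) \<le> 1"
      using q_range[of n] by (intro gnq_prob_le1) auto
    ultimately show ?thesis using eps by linarith
  next
    case True
    define qq where "qq = q n"
    define X where "X = real n * exp (- qq * real n)"
    have qr: "0 \<le> qq" "qq \<le> 1" unfolding qq_def using q_range by auto
    have LB: "L n \<ge> 16" using True g0 unfolding B0_def by (smt (verit) divide_pos_pos)
    have Lg: "g * L n \<ge> 16"
    proof -
      have "L n \<ge> 16 / g" using True g0 unfolding B0_def by simp
      then show ?thesis using g0 by (simp add: field_simps)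
    qed
    have Ldef: "L n = real n * sqrt qq * exp (- qq * real n)" unfolding L_def qq_def ..
    note R = regime[of qq n, OF qr, folded Ldef X_def, OF LB]
    have q0: "0 < qq" and qh: "qq \<le> 1/2" and qL: "qq \<le> 2 / sqrt (L n)" and n16: "n \<ge> 16"
      and LX: "L n = X * sqrt qq" and Xq: "X * qq \<le> 1" and L2X: "(L n)\<^sup>2 \<le> X" and LleX: "L n \<le> X"
      and mu: "real n * (1 - qq) ^ (n - 1) \<ge> exp (-8) * X"
      using R by auto
    define \<mu> where "\<mu> = real n * (1 - qq) ^ (n - 1)"
    have mu': "\<mu> \<ge> g * X" using mu unfolding \<mu>_def g_def .
    have Lpos: "L n > 0" using LB by simp
    have mupos: "\<mu> > 0" using mu' g0 LleX Lpos by (smt (verit) mult_pos_pos)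
    define l where "l = nat \<lfloor>d * L n\<rfloor>"
    have dL0: "d * L n \<ge> 0" using d0 Lpos by simp
    have lfl: "of_int \<lfloor>d * real n * sqrt (q n) * exp (- q n * real n)\<rfloor> = real l"
    proof -
      have e: "d * real n * sqrt (q n) * exp (- q n * real n) = d * L n" unfolding L_def by (simp only: mult.assoc)
      show ?thesis unfolding e l_def using dL0 by simp
    qed
    have lle: "real l \<le> d * L n" unfolding l_def using dL0 by linarith
    define s where "s = nat \<lfloor>c * L n\<rfloor>"
    have cL1: "c * L n \<ge> 1" using Lg unfolding c_def by simp
    have sle: "real s \<le> c * L n" unfolding s_def using cL1 by linarith
    have sge: "real s + 1 \<ge> c * L n" unfolding s_def using cL1 by linarith
    have s1: "s \<ge> 1" unfolding s_def using cL1 by linarith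
    have tb: "g * (L n)\<^sup>2 / 2 \<ge> 4"
    proof -
      have "g * (L n)\<^sup>2 = (g * L n) * L n" by (simp add: power2_eq_square)
      also have "\<dots> \<ge> 16 * 16" using Lg LB by (intro mult_mono) auto
      finally show ?thesis by simp
    qed
    have cond: "real t \<ge> \<mu> / 2 \<Longrightarrow> real t \<ge> 4
        \<and> real (s * s + s) \<le> (real t)^2 * (qq / (1 - qq)) / 16
        \<and> real (s * s + s) \<le> real t / 4
        \<and> (real (2 * s * (2 * s + 1) + 3))^2 \<le> (real t)^2 / 4
        \<and> (real (2 * s * (2 * s + 1) + 3))^2 \<le> real t / (2 * (qq / (1 - qq)))" for t :: nat
    proof -
      assume "real t \<ge> \<mu> / 2"
      then have "real t \<ge> g * X / 2" using mu' by linarith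
      moreover have "real s \<le> g / 16 * L n" using sle unfolding c_def .
      moreover have "L n \<ge> 0" using Lpos by simp
      ultimately show ?thesis
        using conds[OF g0 q0 qh L2X Xq LX _ _ s1 _ tb, of "real t"] by blast
    qed
    have qlt1: "qq < 1" using qh by simp
    have MB: "gnq_prob n qq (\<lambda>E. a \<le> real (matching_number E) \<and> real (matching_number E) \<le> a + real l)
      \<le> (real l + 1) * exp 2 / (real s + 1) + (\<Sum>E\<in>{E. E \<subseteq> all_pairs n \<and> real (Zc n E) < \<mu> / 2}. W n qq E)"
      by (rule main_bound[OF q0 qlt1 s1 cond])
    have CB: "(\<Sum>E\<in>{E. E \<subseteq> all_pairs n \<and> real (Zc n E) < \<mu> / 2}. W n qq E) \<le> 4 / \<mu> + 4 * qq / (1 - qq)"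
      using cheb[of qq n] qr qlt1 n16 mupos unfolding \<mu>_def by simp
    have T1: "(real l + 1) * exp 2 / (real s + 1) \<le> \<epsilon> + exp 2 / c / L n"
    proof -
      have "(real l + 1) * exp 2 / (real s + 1) \<le> (d * L n + 1) * exp 2 / (c * L n)"
        using lle sge cL1 by (intro frac_le mult_right_mono) auto
      also have "\<dots> = \<epsilon> + exp 2 / c / L n" unfolding d_def using c0 Lpos by (simp add: field_simps)
      finally show ?thesis .
    qed
    have T2: "4 / \<mu> \<le> 4 / g / L n"
    proof -
      have "g * L n \<le> \<mu>" using mu' LleX g0 by (smt (verit) mult_left_mono)
      then have "4 / \<mu> \<le> 4 / (g * L n)" using g0 Lpos mupos by (intro divide_left_mono) auto
      then show ?thesis by simp
    qed
    have T3: "4 * qq / (1 - qq) \<le> 16 / sqrt (L n)"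
    proof -
      have "4 * qq / (1 - qq) \<le> 4 * qq / (1/2)" using qh q0 by (intro divide_left_mono) auto
      also have "\<dots> = 8 * qq" by simp
      also have "\<dots> \<le> 8 * (2 / sqrt (L n))" using qL by simp
      finally show ?thesis by simp
    qed
    have dn: "\<delta> n = K / L n + 16 / sqrt (L n)" unfolding \<delta>_def f_def using True by simp
    have "K / L n = exp 2 / c / L n + 4 / g / L n" unfolding K_def by (simp add: add_divide_distrib)
    then show ?thesis unfolding lfl unfolding qq_def[symmetric] dn using MB CB T1 T2 T3 by linarith
  qed
  show "\<exists>d>0. \<exists>\<delta> :: nat \<Rightarrow> real. \<delta> \<longlonglongrightarrow> 0 \<and>
           (\<forall>n. \<forall>a :: real.
              gnq_prob n (q n)
                (\<lambda>E. a \<le> real (matching_number E) \<and>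
                     real (matching_number E) \<le> a + of_int \<lfloor>d * real n * sqrt (q n) * exp (- q n * real n)\<rfloor>)
              \<le> \<epsilon> + \<delta> n)"
    using d0 dlim main by blast
qed


end
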